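(* Let $\alpha>1$, $\beta>0$, $x\in\mathbb{Z}$ and $C>0$. Almost surely on the event $\{R'=\{x,x+1,x+2,x+3\}\}$, there exist infinitely many times $k$ such that one of the following holds: (a) $X_k=x+1$, $\Delta_k(x+1)\le-C$ and $\Delta_k(x+1)+\Delta_k(x+2)\le-C$; (b) $X_k=x+2$, $\Delta_k(x+2)\ge C$ and $\Delta_k(x+1)+\Delta_k(x+2)\ge C$.
   Context: Let $\alpha\in\mathbb{R}$ and $\beta>0$. Let $(X_k)_{k\ge0}$ be the nearest-neighbour random walk on $\mathbb{Z}$ with $X_0=0$ defined as follows. For $k\ge0$ and $j\in\mathbb{Z}$, let $l_k(j):=\#\{m\in\{1,\dots,k\}:\{X_{m-1},X_m\}=\{j-1,j\}\}$, let $\mathcal{F}_k=\sigma(X_0,\dots,X_k)$, and let $\Delta_k(j):=-\alpha l_k(j-1)+l_k(j)-l_k(j+1)+\alpha l_k(j+2)$. The transition probabilities are $\mathbb{P}(X_{k+1}=X_k\pm1\mid\mathcal{F}_k)=\dfrac{e^{\pm\beta\Delta_k(X_k)}}{e^{\beta\Delta_k(X_k)}+e^{-\beta\Delta_k(X_k)}}$. Let $Z_k(j):=\sum_{m=1}^k\mathbf{1}_{\{X_m=j\}}$, $Z_\infty(j):=\lim_k Z_k(j)$, and $R':=\{j\in\mathbb{Z}:Z_\infty(j)=\infty\}$. *)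

theory Defs
  imports "HOL-Probability.Probability"
begin

definition edge_local_time :: "(nat \<Rightarrow> int) \<Rightarrow> nat \<Rightarrow> int \<Rightarrow> nat" where
  "edge_local_time p k j = card {m \<in> {1..k}. {p (m - 1), p m} = {j - 1, j}}"

definition Delta :: "real \<Rightarrow> (nat \<Rightarrow> int) \<Rightarrow> nat \<Rightarrow> int \<Rightarrow> real" where
  "Delta \<alpha> p k j =
     - \<alpha> * real (edge_local_time p k (j - 1)) + real (edge_local_time p k j)
     - real (edge_local_time p k (j + 1)) + \<alpha> * real (edge_local_time p k (j + 2))"

definition step_prob :: "real \<Rightarrow> real \<Rightarrow> (nat \<Rightarrow> int) \<Rightarrow> nat \<Rightarrow> real" where
  "step_prob \<alpha> \<beta> p k =
     (let D = Delta \<alpha> p k (p k) in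
      if p (Suc k) = p k + 1 then exp (\<beta> * D) / (exp (\<beta> * D) + exp (- \<beta> * D))
      else if p (Suc k) = p k - 1 then exp (- \<beta> * D) / (exp (\<beta> * D) + exp (- \<beta> * D))
      else 0)"

definition path_prob :: "real \<Rightarrow> real \<Rightarrow> (nat \<Rightarrow> int) \<Rightarrow> nat \<Rightarrow> real" where
  "path_prob \<alpha> \<beta> p n = (if p 0 = 0 then (\<Prod>k<n. step_prob \<alpha> \<beta> p k) else 0)"

definition is_walk :: "'a measure \<Rightarrow> real \<Rightarrow> real \<Rightarrow> (nat \<Rightarrow> 'a \<Rightarrow> int) \<Rightarrow> bool" where
  "is_walk M \<alpha> \<beta> X \<longleftrightarrow>
     prob_space M \<and>
     (\<forall>i. X i \<in> measurable M (count_space UNIV)) \<and>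
     (\<forall>n (p :: nat \<Rightarrow> int). measure M {\<omega> \<in> space M. \<forall>i\<le>n. X i \<omega> = p i} = path_prob \<alpha> \<beta> p n)"

definition R' :: "(nat \<Rightarrow> 'a \<Rightarrow> int) \<Rightarrow> 'a \<Rightarrow> int set" where
  "R' X \<omega> = {j. infinite {m. m \<ge> 1 \<and> X m \<omega> = j}}"

end

theory Submission
  imports Defs
begin

lemma elt_cong:
  assumes "\<And>i. i \<le> k \<Longrightarrow> p i = q i"
  shows "edge_local_time p k j = edge_local_time q k j"
proof -
  have "{m \<in> {1..k}. {p (m - 1), p m} = {j - 1, j}} = {m \<in> {1..k}. {q (m - 1), q m} = {j - 1, j}}"
    using assms by (auto simp: diff_le_self)
  then show ?thesis unfolding edge_local_time_def by simp
qed

lemma Delta_cong: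
  assumes "\<And>i. i \<le> k \<Longrightarrow> p i = q i"
  shows "Delta a p k j = Delta a q k j"
  unfolding Delta_def using elt_cong[OF assms] by simp

lemma card_Suc_filter: "card {m \<in> {1..Suc k}. P m} = card {m \<in> {1..k}. P m} + (if P (Suc k) then 1 else 0)"
proof -
  have e: "{m \<in> {1..Suc k}. P m} = {m \<in> {1..k}. P m} \<union> (if P (Suc k) then {Suc k} else {})"
    by (auto simp: le_Suc_eq)
  show ?thesis unfolding e by (simp add: card_insert_if)
qed

lemma elt_Suc:
  "edge_local_time p (Suc k) j = edge_local_time p k j + (if {p k, p (Suc k)} = {j - 1, j} then 1 else 0)"
  unfolding edge_local_time_def using card_Suc_filter[where P="\<lambda>m. {p (m - 1), p m} = {j - 1, j}" and k=k]
  by simp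

lemma elt_mono: "k \<le> k' \<Longrightarrow> edge_local_time p k j \<le> edge_local_time p k' j"
  unfolding edge_local_time_def by (rule card_mono) auto


locale wsetup =
  fixes \<alpha> \<beta> C :: real and x :: int
  assumes alpha_gt: "\<alpha> > 1" and beta_pos: "\<beta> > 0" and C_pos: "C > 0"
begin

definition up :: "real \<Rightarrow> real" where
  "up D = exp (\<beta> * D) / (exp (\<beta> * D) + exp (- \<beta> * D))"

definition KK :: real where "KK = exp (2 * \<beta> * C)"
definition rho :: "nat \<Rightarrow> real" where "rho i = 1 / (1 + KK * exp (- 4 * \<beta> * real i))^2"
definition Phi :: "nat \<Rightarrow> real" where "Phi n = (\<Prod>i<n. rho i)"
definition phi1 :: "real \<Rightarrow> real" where "phi1 d = Phi (nat \<lceil>(d + C) / 2\<rceil>)"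
definition phi2 :: "real \<Rightarrow> real \<Rightarrow> real" where
  "phi2 e S = min (1/2) (up (e - S) * (if e - 1 > - C then phi1 (e - 1) else 1))"
definition delta1 :: real where "delta1 = exp (- 2 * KK / (1 - exp (- 4 * \<beta>)))"

lemma up_alt: "up D = 1 / (1 + exp (- 2 * \<beta> * D))"
proof -
  have "exp (\<beta> * D) + exp (- \<beta> * D) = exp (\<beta> * D) * (1 + exp (- 2 * \<beta> * D))"
    by (simp add: distrib_left exp_add[symmetric])
  then show ?thesis unfolding up_def by simp
qed

lemma up_pos: "up D > 0" unfolding up_alt by (simp add: add_pos_pos)
lemma up_le1: "up D \<le> 1"
proof -
  have "1 \<le> 1 + exp (- 2 * \<beta> * D)" "0 < 1 + exp (- 2 * \<beta> * D)" by (simp_all add: add_pos_pos)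
  then show ?thesis unfolding up_alt by (simp add: divide_le_eq_1)
qed
lemma up_neg: "up (- D) = exp (- \<beta> * D) / (exp (\<beta> * D) + exp (- \<beta> * D))"
  unfolding up_def by (simp add: add.commute)
lemma up_sum: "up D + up (- D) = 1"
proof -
  have "exp (\<beta> * D) + exp (- (\<beta> * D)) > 0" by (simp add: add_pos_pos)
  then show ?thesis unfolding up_def by (simp add: add.commute add_divide_distrib[symmetric])
qed
lemma up_mono: "D \<le> D' \<Longrightarrow> up D \<le> up D'"
  unfolding up_alt using beta_pos
  by (intro divide_left_mono) (auto simp: add_pos_pos mult_le_cancel_left_pos)
lemma up_zero: "up 0 = 1/2" unfolding up_def by simp

lemma KK_ge1: "KK \<ge> 1" unfolding KK_def using beta_pos C_pos by simp

lemma rho_pos: "rho i > 0"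
proof -
  have "1 + KK * exp (- 4 * \<beta> * real i) > 0" using KK_ge1 by (simp add: add_pos_nonneg)
  then show ?thesis unfolding rho_def by simp
qed
lemma rho_le1: "rho i \<le> 1"
proof -
  have y: "KK * exp (- 4 * \<beta> * real i) \<ge> 0" using KK_ge1 by simp
  then have "1 \<le> (1 + KK * exp (- 4 * \<beta> * real i))^2" by (simp add: one_le_power)
  then show ?thesis unfolding rho_def by (simp add: divide_le_eq_1)
qed

lemma Phi_pos: "Phi n > 0" unfolding Phi_def using rho_pos by (simp add: prod_pos)
lemma Phi_le1: "Phi n \<le> 1" unfolding Phi_def using rho_pos rho_le1
  by (intro prod_le_1) (auto simp: less_imp_le)

lemma Phi_Suc: "Phi (Suc n) = rho n * Phi n" unfolding Phi_def by simp

lemma Phi_le_rho0: "n \<ge> 1 \<Longrightarrow> Phi n \<le> rho 0"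
proof (induction n)
  case 0 then show ?case by simp
next
  case (Suc n)
  show ?case
  proof (cases "n = 0")
    case True then show ?thesis by (simp add: Phi_def)
  next
    case False
    then have "Phi n \<le> rho 0" using Suc by simp
    moreover have "rho n \<le> 1" by (rule rho_le1)
    ultimately show ?thesis unfolding Phi_Suc using rho_pos Phi_pos
      by (smt (verit, best) mult_left_le_one_le)
  qed
qed

lemma rho_ge: "rho i \<ge> exp (- 2 * KK * exp (- 4 * \<beta>) ^ i)"
proof -
  define y where "y = KK * exp (- 4 * \<beta> * real i)"
  have y0: "y \<ge> 0" unfolding y_def using KK_ge1 by simp
  have "exp (- 4 * \<beta>) ^ i = exp (real i * (- 4 * \<beta>))" by (rule exp_of_nat_mult[symmetric])
  also have "real i * (- 4 * \<beta>) = - 4 * \<beta> * real i" by (simp only: mult.commute)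
  finally have ey: "exp (- 4 * \<beta>) ^ i = exp (- 4 * \<beta> * real i)" .
  have "1 + y \<le> exp y" by (rule exp_ge_add_one_self)
  then have "(1 + y)^2 \<le> exp y ^ 2" using y0 by (intro power_mono) auto
  also have "exp y ^ 2 = exp (2 * y)" using exp_of_nat_mult[of 2 y] by simp
  finally have h: "(1 + y)^2 \<le> exp (2 * y)" .
  have "exp (- 2 * y) = 1 / exp (2 * y)" by (simp add: exp_minus inverse_eq_divide)
  also have "\<dots> \<le> 1 / (1 + y)^2" using h y0 by (intro divide_left_mono) (auto simp: add_pos_nonneg)
  finally have h2: "exp (- 2 * y) \<le> 1 / (1 + y)^2" .
  have e1: "exp (- 2 * KK * exp (- 4 * \<beta>) ^ i) = exp (- 2 * y)" unfolding ey y_def by (simp only: mult.assoc)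
  have e2: "rho i = 1 / (1 + y)^2" unfolding rho_def y_def ..
  show ?thesis using h2 unfolding e1 e2 .
qed

lemma Phi_ge: "Phi n \<ge> delta1"
proof -
  define q where "q = exp (- 4 * \<beta>)"
  have q0: "0 < q" and q1: "q < 1" unfolding q_def using beta_pos by auto
  have "(\<Prod>i<n. exp (- 2 * KK * q ^ i)) \<le> Phi n"
    unfolding Phi_def q_def using rho_ge by (intro prod_mono) (auto simp: less_imp_le)
  moreover have "(\<Prod>i<n. exp (- 2 * KK * q ^ i)) = exp (- 2 * KK * (\<Sum>i<n. q ^ i))"
    by (simp add: exp_sum[symmetric] sum_distrib_left)
  moreover have "(\<Sum>i<n. q ^ i) \<le> 1 / (1 - q)"
  proof -
    have "(\<Sum>i<n. q ^ i) = (1 - q ^ n) / (1 - q)" using q1 by (simp add: sum_gp_strict)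
    also have "\<dots> \<le> 1 / (1 - q)" using q0 q1 by (intro divide_right_mono) auto
    finally show ?thesis .
  qed
  then have "2 * KK * (\<Sum>i<n. q ^ i) \<le> 2 * KK * (1 / (1 - q))"
    using KK_ge1 by (intro mult_left_mono) auto
  then have "exp (- 2 * KK * (1 / (1 - q))) \<le> exp (- 2 * KK * (\<Sum>i<n. q ^ i))"
    by simp
  moreover have "delta1 = exp (- 2 * KK * (1 / (1 - q)))" unfolding delta1_def q_def by simp
  ultimately show ?thesis by linarith
qed

lemma delta1_pos: "delta1 > 0" unfolding delta1_def by simp
lemma delta1_le1: "delta1 \<le> 1" using Phi_ge[of 0] by (simp add: Phi_def)

lemma phi1_ge: "phi1 d \<ge> delta1" unfolding phi1_def by (rule Phi_ge)
lemma phi1_le1: "phi1 d \<le> 1" unfolding phi1_def by (rule Phi_le1)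
lemma phi1_pos: "phi1 d > 0" unfolding phi1_def by (rule Phi_pos)

lemma up_ge_K: "d > - C \<Longrightarrow> up d \<ge> 1 / (1 + KK)"
proof -
  assume "d > - C"
  then have "\<beta> * (- d) \<le> \<beta> * C" using beta_pos by (intro mult_left_mono) auto
  then have "- 2 * \<beta> * d \<le> 2 * \<beta> * C" by (simp add: mult.commute)
  then have "exp (- 2 * \<beta> * d) \<le> KK" unfolding KK_def by simp
  moreover have "0 < 1 + exp (- 2 * \<beta> * d)" "0 < 1 + KK" using KK_ge1 by (simp_all add: add_pos_pos)
  ultimately show ?thesis unfolding up_alt by (intro divide_left_mono) auto
qed

lemma phi1_le_half_up: "d > - C \<Longrightarrow> phi1 d \<le> up d / 2"
proof -
  assume d: "d > - C"
  have "1 \<le> \<lceil>(d + C) / 2\<rceil>" using d by simp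
  then have n1: "nat \<lceil>(d + C) / 2\<rceil> \<ge> 1" by linarith
  have "phi1 d \<le> rho 0" unfolding phi1_def using Phi_le_rho0[OF n1] .
  also have "rho 0 = 1 / (1 + KK)^2" unfolding rho_def by simp
  also have "\<dots> = (1 / (1 + KK)) * (1 / (1 + KK))" by (simp add: power2_eq_square)
  also have "\<dots> \<le> (1 / (1 + KK)) * (1 / 2)" using KK_ge1 by (intro mult_left_mono) auto
  also have "\<dots> = (1 / (1 + KK)) / 2" by simp
  also have "\<dots> \<le> up d / 2" using up_ge_K[OF d] by (intro divide_right_mono) auto
  finally show ?thesis .
qed

lemma phi1_rec:
  assumes d: "d > - C" and S: "S \<le> - C - 1"
  shows "phi1 d \<le> up d * up (d - 1 - S) * (if d - 2 > - C then phi1 (d - 2) else 1)"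
proof -
  define n where "n = nat \<lceil>(d + C) / 2\<rceil>"
  define t where "t = d + C"
  have t0: "t > 0" using d unfolding t_def by simp
  define c where "c = \<lceil>(d + C) / 2\<rceil>"
  have c1: "1 \<le> c" using d unfolding c_def by simp
  have cc: "of_int c - 1 < (d + C) / 2" "(d + C) / 2 \<le> of_int c" using ceiling_correct[of "(d + C) / 2"] unfolding c_def by auto
  have nc: "n = nat c" unfolding n_def c_def by simp
  have n1: "n \<ge> 1" using c1 nc by linarith
  have rn: "real (n - 1) = of_int c - 1" using nc c1 by (simp add: of_nat_diff)
  have "2 * (of_int c - 1) < 2 * ((d + C) / 2)" using cc(1) by (intro mult_strict_left_mono) auto
  then have tn: "t > 2 * real (n - 1)" unfolding t_def rn by simp
  have rho_bd: "rho (n - 1) \<le> up d * up (d - 1 - S)"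
  proof -
    define E where "E = exp (- 2 * \<beta> * t)"
    define E' where "E' = exp (- 4 * \<beta> * real (n - 1))"
    have E0: "E > 0" unfolding E_def by simp
    have EE: "E \<le> E'" unfolding E_def E'_def using tn beta_pos by (simp add: mult_le_cancel_left_pos)
    have "exp (- 2 * \<beta> * d) = KK * E" unfolding KK_def E_def t_def
      by (simp add: exp_add[symmetric] algebra_simps)
    then have u1: "up d = 1 / (1 + KK * E)" unfolding up_alt by simp
    have "up (d - 1 - S) \<ge> up t" unfolding t_def using S by (intro up_mono) simp
    moreover have "up t = 1 / (1 + E)" unfolding up_alt E_def by simp
    moreover have "1 / (1 + E) \<ge> 1 / (1 + KK * E)" using KK_ge1 E0
      by (intro divide_left_mono) (auto simp: add_pos_pos)
    ultimately have u2: "up (d - 1 - S) \<ge> 1 / (1 + KK * E)" by simp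
    have r0: "rho (n - 1) = 1 / (1 + KK * E')^2" unfolding rho_def E'_def by simp
    have p1: "0 < 1 + KK * E" using KK_ge1 E0 by (simp add: add_pos_pos)
    have p2: "1 + KK * E \<le> 1 + KK * E'" using KK_ge1 EE by (simp add: mult_left_mono)
    have "(1 + KK * E)^2 \<le> (1 + KK * E')^2" using p1 p2 by (intro power_mono) auto
    moreover have "0 < (1 + KK * E)^2" using p1 by simp
    ultimately have r1: "1 / (1 + KK * E')^2 \<le> 1 / (1 + KK * E)^2"
      using p1 p2 by (intro divide_left_mono) (auto intro!: mult_pos_pos)
    have "rho (n - 1) \<le> (1 / (1 + KK * E)) * (1 / (1 + KK * E))" using r0 r1 by (simp add: power2_eq_square)
    also have "\<dots> \<le> up d * up (d - 1 - S)" using u1 u2 KK_ge1 E0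
      by (intro mult_mono) (auto simp: add_pos_pos)
    finally show ?thesis .
  qed
  have pos: "up d * up (d - 1 - S) \<ge> 0" using up_pos by (simp add: less_imp_le)
  show ?thesis
  proof (cases "d - 2 > - C")
    case True
    have "nat \<lceil>(d - 2 + C) / 2\<rceil> = n - 1" unfolding n_def
    proof -
      have "(d - 2 + C) / 2 = (d + C) / 2 - 1" by (simp add: field_simps)
      then have "\<lceil>(d - 2 + C) / 2\<rceil> = \<lceil>(d + C) / 2 - 1\<rceil>" by (simp only:)
      also have "\<dots> = \<lceil>(d + C) / 2\<rceil> - 1" by (rule ceiling_diff_one)
      finally have "\<lceil>(d - 2 + C) / 2\<rceil> = \<lceil>(d + C) / 2\<rceil> - 1" .
      then show "nat \<lceil>(d - 2 + C) / 2\<rceil> = nat \<lceil>(d + C) / 2\<rceil> - 1" by linarith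
    qed
    then have "phi1 (d - 2) = Phi (n - 1)" unfolding phi1_def by simp
    moreover have "phi1 d = rho (n - 1) * Phi (n - 1)" unfolding phi1_def n_def[symmetric]
      using n1 Phi_Suc[of "n - 1"] by simp
    ultimately show ?thesis using True rho_bd Phi_pos by (simp add: mult_right_mono less_imp_le)
  next
    case False
    then have "(d + C) / 2 \<le> 1" by simp
    then have "c \<le> 1" using cc by (simp add: ceiling_le_iff c_def)
    then have "n = 1" using nc c1 by simp
    then have "phi1 d = rho 0" unfolding phi1_def n_def[symmetric] by (simp add: Phi_def)
    then show ?thesis using False rho_bd \<open>n = 1\<close> by simp
  qed
qed

lemma phi1_le_phi2:
  assumes d: "d > - C" and S: "S \<le> - C - 1"
  shows "phi1 d \<le> up d * phi2 (d - 1) S"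
proof -
  have a: "phi1 d \<le> up d * (1/2)" using phi1_le_half_up[OF d] by simp
  have b: "phi1 d \<le> up d * (up (d - 1 - S) * (if d - 2 > - C then phi1 (d - 2) else 1))"
    using phi1_rec[OF d S] by (simp only: mult.assoc)
  have u0: "0 \<le> up d" using up_pos less_imp_le by blast
  have "up d * phi2 (d - 1) S = min (up d * (1/2)) (up d * (up (d - 1 - S) * (if d - 2 > - C then phi1 (d - 2) else 1)))"
    unfolding phi2_def min_mult_distrib_left using u0 by simp
  then show ?thesis using a b by (cases "- C < d - 2") (auto intro!: min.boundedI)
qed

lemma phi2_le_half: "phi2 e S \<le> 1/2" unfolding phi2_def by simp

lemma phi2_ge: assumes "e > - C - 1" "S \<le> - C - 1" shows "phi2 e S \<ge> delta1 / 2"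
proof -
  define Y where "Y = (if e - 1 > - C then phi1 (e - 1) else 1)"
  have u: "up (e - S) \<ge> 1/2" using up_mono[of 0 "e - S"] assms up_zero by simp
  have Y: "Y \<ge> delta1" unfolding Y_def using phi1_ge delta1_le1 by simp
  have "up (e - S) * Y \<ge> 1/2 * delta1"
    using u Y delta1_pos by (intro mult_mono) auto
  then have h2: "delta1 / 2 \<le> up (e - S) * Y" by simp
  have h1: "delta1 / 2 \<le> 1 / 2" using delta1_le1 by simp
  have "phi2 e S = min (1/2) (up (e - S) * Y)" unfolding phi2_def Y_def ..
  then show ?thesis using h1 h2 by simp
qed

lemma phi2_ge0: "phi2 e S \<ge> 0"
  unfolding phi2_def using up_pos phi1_pos by (simp add: less_imp_le)

end

lemma pair_up: "{u, u + 1} = {i - 1, i::int} \<longleftrightarrow> i = u + 1"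
  by (auto simp: doubleton_eq_iff)
lemma pair_dn: "{u, u - 1} = {i - 1, i::int} \<longleftrightarrow> i = u"
  by (auto simp: doubleton_eq_iff)

lemma elt_ext:
  assumes "v = p N + 1 \<and> e = p N + 1 \<or> v = p N - 1 \<and> e = p N"
  shows "edge_local_time (p(Suc N := v)) (Suc N) i = edge_local_time p N i + (if i = e then 1 else 0)"
proof -
  have a: "edge_local_time (p(Suc N := v)) N i = edge_local_time p N i"
    by (rule elt_cong) auto
  have "({p N, v} = {i - 1, i}) = (i = e)" using assms pair_up pair_dn by auto
  then show ?thesis using elt_Suc[of "p(Suc N := v)" N i] a by simp
qed

lemma Delta_ext:
  assumes "v = p N + 1 \<and> e = p N + 1 \<or> v = p N - 1 \<and> e = p N"
  shows "Delta a (p(Suc N := v)) (Suc N) j = Delta a p N j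
     - a * (if j - 1 = e then 1 else 0) + (if j = e then 1 else 0)
     - (if j + 1 = e then 1 else 0) + a * (if j + 2 = e then 1 else 0)"
  unfolding Delta_def elt_ext[where v=v and p=p and N=N and e=e, OF assms] by (simp add: algebra_simps)

lemma step_prob_cong:
  assumes "\<And>i. i \<le> Suc k \<Longrightarrow> p i = q i"
  shows "step_prob a b p k = step_prob a b q k"
proof -
  have "Delta a p k (p k) = Delta a q k (q k)" using assms Delta_cong[of k p q] by simp
  then show ?thesis unfolding step_prob_def using assms by (simp add: Let_def)
qed

lemma path_prob_cong:
  assumes "\<And>i. i \<le> n \<Longrightarrow> p i = q i"
  shows "path_prob a b p n = path_prob a b q n"
proof -
  have "(\<Prod>k<n. step_prob a b p k) = (\<Prod>k<n. step_prob a b q k)"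
    using assms by (intro prod.cong refl step_prob_cong) auto
  then show ?thesis unfolding path_prob_def using assms by simp
qed

lemma path_prob_ext:
  "path_prob a b (p(Suc N := v)) (Suc N) = path_prob a b p N * step_prob a b (p(Suc N := v)) N"
proof -
  have "(\<Prod>k<N. step_prob a b (p(Suc N := v)) k) = (\<Prod>k<N. step_prob a b p k)"
    by (intro prod.cong refl step_prob_cong) auto
  then show ?thesis unfolding path_prob_def by simp
qed

definition NN :: "nat \<Rightarrow> (nat \<Rightarrow> int) set" where
  "NN N = {p. p 0 = 0 \<and> (\<forall>k<N. p (Suc k) = p k + 1 \<or> p (Suc k) = p k - 1) \<and> (\<forall>k>N. p k = 0)}"

definition extf :: "nat \<Rightarrow> (nat \<Rightarrow> int) \<times> int \<Rightarrow> (nat \<Rightarrow> int)" where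
  "extf N = (\<lambda>(p, s). p(Suc N := p N + s))"

lemma NN_0: "NN 0 = {\<lambda>_. 0}"
  unfolding NN_def apply (auto simp: fun_eq_iff) by (metis neq0_conv)

lemma NN_Suc: "NN (Suc N) = extf N ` (NN N \<times> {1, -1})"
proof
  show "NN (Suc N) \<subseteq> extf N ` (NN N \<times> {1, -1})"
  proof
    fix q assume q: "q \<in> NN (Suc N)"
    define p where "p = q(Suc N := 0)"
    have "p \<in> NN N" using q unfolding NN_def p_def
      by (auto simp: less_Suc_eq)
    moreover have "q (Suc N) - q N \<in> {1, -1}" using q unfolding NN_def by force
    moreover have "q = extf N (p, q (Suc N) - q N)" unfolding extf_def p_def by auto
    ultimately show "q \<in> extf N ` (NN N \<times> {1, -1})" by blast
  qed
next
  show "extf N ` (NN N \<times> {1, -1}) \<subseteq> NN (Suc N)"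
    unfolding extf_def NN_def by (auto simp: less_Suc_eq)
qed

lemma finite_NN: "finite (NN N)"
  by (induction N) (auto simp: NN_0 NN_Suc)

lemma inj_extf: "inj_on (extf N) (NN N \<times> {1, -1})"
proof (rule inj_onI)
  fix a b assume a: "a \<in> NN N \<times> {1, -1}" and b: "b \<in> NN N \<times> {1, -1}" and e: "extf N a = extf N b"
  obtain p s where ps: "a = (p, s)" by force
  obtain p' s' where ps': "b = (p', s')" by force
  have e': "p(Suc N := p N + s) = p'(Suc N := p' N + s')" using e ps ps' unfolding extf_def by simp
  have "p (Suc N) = 0" "p' (Suc N) = 0" using a b ps ps' unfolding NN_def by auto
  then have "p = p'" using fun_cong[OF e'] by (metis fun_upd_other ext)
  moreover have "p N + s = p' N + s'" using fun_cong[OF e', of "Suc N"] by simp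
  ultimately show "a = b" using ps ps' by simp
qed

lemma sum_NN_Suc:
  "(\<Sum>q\<in>NN (Suc N). f q) = (\<Sum>p\<in>NN N. f (p(Suc N := p N + 1)) + f (p(Suc N := p N - 1)))"
proof -
  have "(\<Sum>q\<in>NN (Suc N). f q) = (\<Sum>a\<in>NN N \<times> {1, -1}. f (extf N a))"
    unfolding NN_Suc by (rule sum.reindex[OF inj_extf, unfolded comp_def])
  also have "\<dots> = (\<Sum>p\<in>NN N. \<Sum>s\<in>{1, -1}. f (extf N (p, s)))"
    using sum.cartesian_product[of "\<lambda>p s. f (extf N (p, s))" "{1, -1}" "NN N"]
    by (simp add: case_prod_eta)
  also have "\<dots> = (\<Sum>p\<in>NN N. f (p(Suc N := p N + 1)) + f (p(Suc N := p N - 1)))"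
    unfolding extf_def by simp
  finally show ?thesis .
qed

context wsetup begin

lemma step_up:
  "step_prob \<alpha> \<beta> (p(Suc N := p N + 1)) N = up (Delta \<alpha> p N (p N))"
proof -
  have "Delta \<alpha> (p(Suc N := p N + 1)) N (p N) = Delta \<alpha> p N (p N)" by (rule Delta_cong) auto
  then show ?thesis unfolding step_prob_def up_def by (simp add: Let_def)
qed

lemma step_dn:
  "step_prob \<alpha> \<beta> (p(Suc N := p N - 1)) N = up (- Delta \<alpha> p N (p N))"
proof -
  have "Delta \<alpha> (p(Suc N := p N - 1)) N (p N) = Delta \<alpha> p N (p N)" by (rule Delta_cong) auto
  then show ?thesis unfolding step_prob_def up_neg by (simp add: Let_def)
qed

lemma sum_NN_prob: "(\<Sum>p\<in>NN N. path_prob \<alpha> \<beta> p N) = 1"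
proof (induction N)
  case 0 then show ?case by (simp add: NN_0 path_prob_def)
next
  case (Suc N)
  have "(\<Sum>q\<in>NN (Suc N). path_prob \<alpha> \<beta> q (Suc N))
      = (\<Sum>p\<in>NN N. path_prob \<alpha> \<beta> p N * (up (Delta \<alpha> p N (p N)) + up (- Delta \<alpha> p N (p N))))"
    unfolding sum_NN_Suc path_prob_ext step_up step_dn by (simp add: algebra_simps)
  also have "\<dots> = 1" using Suc by (simp add: up_sum)
  finally show ?case .
qed

end

context wsetup begin

lemma phi2_le: "phi2 e S \<le> up (e - S) * (if e - 1 > - C then phi1 (e - 1) else 1)"
  unfolding phi2_def by simp

lemma Phi_anti: "m \<le> n \<Longrightarrow> Phi n \<le> Phi m"
proof (induction n)
  case 0 then show ?case by simp
next
  case (Suc n)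
  show ?case
  proof (cases "m = Suc n")
    case False
    then have "Phi n \<le> Phi m" using Suc by simp
    moreover have "Phi (Suc n) \<le> Phi n" unfolding Phi_Suc using rho_le1 Phi_pos
      by (simp add: mult_left_le_one_le less_imp_le)
    ultimately show ?thesis by simp
  qed simp
qed

lemma delta1_le_rho0: "delta1 \<le> rho 0" using Phi_ge[of 1] by (simp add: Phi_def)

lemma rho_le_upup: "a \<ge> 2 * real i \<Longrightarrow> b \<ge> 2 * real i \<Longrightarrow> rho i \<le> up a * up b"
proof -
  assume a: "a \<ge> 2 * real i" and b: "b \<ge> 2 * real i"
  define E where "E = exp (- 4 * \<beta> * real i)"
  have E0: "E > 0" unfolding E_def by simp
  have ua: "up a \<ge> 1 / (1 + E)" unfolding up_alt E_def
    using a beta_pos by (intro divide_left_mono) (auto simp: add_pos_pos mult_le_cancel_left_pos)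
  have ub: "up b \<ge> 1 / (1 + E)" unfolding up_alt E_def
    using b beta_pos by (intro divide_left_mono) (auto simp: add_pos_pos mult_le_cancel_left_pos)
  have "1 / (1 + E) \<ge> 1 / (1 + KK * E)" using KK_ge1 E0
    by (intro divide_left_mono) (auto simp: add_pos_pos)
  moreover have "rho i = (1 / (1 + KK * E)) * (1 / (1 + KK * E))"
    unfolding rho_def E_def power2_eq_square by simp
  moreover have "0 \<le> 1 / (1 + KK * E)" using E0 KK_ge1 by (simp add: add_pos_pos less_imp_le)
  ultimately have "rho i \<le> (1 / (1 + E)) * (1 / (1 + E))"
    by (metis mult_mono order_trans)
  also have "\<dots> \<le> up a * up b" using ua ub E0 up_pos[of a] by (intro mult_mono) (auto simp: add_pos_pos)
  finally show ?thesis .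
qed

definition eta :: real where "eta = 2 * (\<alpha> - 1)"
definition ww :: real where "ww = C + 2"
definition nA :: "real \<Rightarrow> nat" where "nA S = nat \<lceil>(S + C + 1) / eta\<rceil>"
definition nB :: "real \<Rightarrow> nat" where "nB S = nat \<lceil>(C + 1 - S) / eta\<rceil>"
definition NB :: nat where "NB = nat \<lceil>2 * (C + 1) / eta\<rceil>"
definition jj :: "real \<Rightarrow> nat" where "jj f = nat \<lceil>(- ww - f) / 2\<rceil>"
definition gam :: real where "gam = up (- ww) * delta1 / 4"
definition G2M :: "real \<Rightarrow> real \<Rightarrow> real" where "G2M f S = gam ^ nB S / 4 * Phi (jj f)"
definition LB1 :: real where "LB1 = min (1/2) (up (- ww) * gam ^ NB * delta1 / 4)"
definition lam :: real where "lam = min (1/4) (min LB1 delta1) / 2"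
definition Gmin :: real where "Gmin = min (delta1 / 2) (min (gam ^ NB * delta1 / 4) (min LB1 (lam ^ NB / 2)))"
definition dl :: real where "dl = Gmin / 2"
definition th :: real where "th = 1 / (1 - dl)"

lemma eta_pos: "eta > 0" unfolding eta_def using alpha_gt by simp
lemma upw_pos: "up (- ww) > 0" by (rule up_pos)
lemma gam_pos: "gam > 0" unfolding gam_def using up_pos delta1_pos by simp
lemma gam_le1: "gam \<le> 1"
proof -
  have "up (- ww) * delta1 \<le> 1" using up_le1[of "- ww"] delta1_le1 delta1_pos
    by (intro mult_le_one) auto
  then show ?thesis unfolding gam_def by simp
qed
lemma gam_le_rho0: "gam \<le> up (- ww) * rho 0"
proof -
  have "delta1 / 4 \<le> rho 0" using delta1_le_rho0 delta1_pos by simp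
  then show ?thesis unfolding gam_def using up_pos[of "- ww"] by (simp add: mult_left_mono)
qed

lemma G2M_pos: "G2M f S > 0" unfolding G2M_def using gam_pos Phi_pos by simp
lemma G2M_le: "G2M f S \<le> 1/4"
proof -
  have "gam ^ nB S \<le> 1" using gam_pos gam_le1 by (simp add: power_le_one)
  moreover have "Phi (jj f) \<le> 1" by (rule Phi_le1)
  ultimately have "gam ^ nB S * Phi (jj f) \<le> 1" using Phi_pos[of "jj f"] by (intro mult_le_one) auto
  then show ?thesis unfolding G2M_def by simp
qed
lemma G2M_ge: "nB S \<le> NB \<Longrightarrow> G2M f S \<ge> gam ^ NB * delta1 / 4"
proof -
  assume n: "nB S \<le> NB"
  have "gam ^ NB \<le> gam ^ nB S" using gam_pos gam_le1 n by (intro power_decreasing) auto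
  moreover have "delta1 \<le> Phi (jj f)" by (rule Phi_ge)
  ultimately have "gam ^ NB * delta1 \<le> gam ^ nB S * Phi (jj f)"
    using gam_pos delta1_pos by (intro mult_mono) auto
  then show ?thesis unfolding G2M_def by simp
qed

lemma LB1_pos: "LB1 > 0" unfolding LB1_def using up_pos gam_pos delta1_pos by simp
lemma LB1_le: "LB1 \<le> 1/2" unfolding LB1_def by simp
lemma lam_pos: "lam > 0" unfolding lam_def using LB1_pos delta1_pos by simp
lemma lam_le: "lam \<le> 1/8" "lam \<le> LB1 / 2" "lam \<le> delta1 / 2"
  unfolding lam_def by auto
lemma lam_le1: "lam \<le> 1" using lam_le by simp
lemma Gmin_pos: "Gmin > 0"
  unfolding Gmin_def using delta1_pos gam_pos LB1_pos lam_pos by simp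
lemma Gmin_le: "Gmin \<le> delta1 / 2" "Gmin \<le> gam ^ NB * delta1 / 4" "Gmin \<le> LB1" "Gmin \<le> lam ^ NB / 2"
  unfolding Gmin_def by auto
lemma Gmin_le_quarter: "Gmin \<le> 1/2" using Gmin_le(1) delta1_le1 by simp
lemma dl_pos: "dl > 0" unfolding dl_def using Gmin_pos by simp
lemma dl_le: "dl \<le> 1/4" unfolding dl_def using Gmin_le_quarter by simp
lemma th_gt1: "th > 1" unfolding th_def using dl_pos dl_le by (simp add: field_simps)
lemma th_pos: "th > 0" using th_gt1 by simp
lemma th_ge1: "th \<ge> 1" using th_gt1 by simp
lemma th_mult: "th * (1 - dl) = 1" unfolding th_def using dl_le by simp

lemma nB_shift: "nB (S + eta) = nB S - 1"
proof -
  have "(C + 1 - (S + eta)) / eta = (C + 1 - S) / eta - 1" using eta_pos by (simp add: field_simps)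
  then have "\<lceil>(C + 1 - (S + eta)) / eta\<rceil> = \<lceil>(C + 1 - S) / eta\<rceil> - 1" by simp
  then show ?thesis unfolding nB_def by linarith
qed
lemma nA_shift: "nA (S - eta) = nA S - 1"
proof -
  have "(S - eta + C + 1) / eta = (S + C + 1) / eta - 1" using eta_pos by (simp add: field_simps)
  then have "\<lceil>(S - eta + C + 1) / eta\<rceil> = \<lceil>(S + C + 1) / eta\<rceil> - 1" by simp
  then show ?thesis unfolding nA_def by linarith
qed
lemma nB_ge1: "S < C + 1 \<Longrightarrow> nB S \<ge> 1"
proof -
  assume "S < C + 1"
  then have "(C + 1 - S) / eta > 0" using eta_pos by simp
  then show ?thesis unfolding nB_def by linarith
qed
lemma nA_ge1: "S > - C - 1 \<Longrightarrow> nA S \<ge> 1"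
proof -
  assume "S > - C - 1"
  then have "(S + C + 1) / eta > 0" using eta_pos by simp
  then show ?thesis unfolding nA_def by linarith
qed
lemma nB_le: "S > - C - 1 \<Longrightarrow> nB S \<le> NB"
proof -
  assume "S > - C - 1"
  then have "(C + 1 - S) / eta \<le> 2 * (C + 1) / eta" using eta_pos by (intro divide_right_mono) auto
  then have "\<lceil>(C + 1 - S) / eta\<rceil> \<le> \<lceil>2 * (C + 1) / eta\<rceil>" by (rule ceiling_mono)
  then show ?thesis unfolding nB_def NB_def by linarith
qed
lemma nA_le: "S < C + 1 \<Longrightarrow> nA S \<le> NB"
proof -
  assume "S < C + 1"
  then have "(S + C + 1) / eta \<le> 2 * (C + 1) / eta" using eta_pos by (intro divide_right_mono) auto
  then have "\<lceil>(S + C + 1) / eta\<rceil> \<le> \<lceil>2 * (C + 1) / eta\<rceil>" by (rule ceiling_mono)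
  then show ?thesis unfolding nA_def NB_def by linarith
qed

lemma jj_zero: "f \<ge> - ww \<Longrightarrow> jj f = 0"
proof -
  assume "f \<ge> - ww"
  then have "(- ww - f) / 2 \<le> 0" by simp
  then show ?thesis unfolding jj_def by linarith
qed
lemma jj_facts:
  assumes "f < - ww"
  shows "jj f \<ge> 1" "jj (f + 2) = jj f - 1" "- ww - f > 2 * real (jj f - 1)"
proof -
  define c where "c = \<lceil>(- ww - f) / 2\<rceil>"
  have c1: "1 \<le> c" using assms unfolding c_def by simp
  have cc: "of_int c - 1 < (- ww - f) / 2" using ceiling_correct[of "(- ww - f) / 2"] unfolding c_def by auto
  have jc: "jj f = nat c" unfolding jj_def c_def ..
  show "jj f \<ge> 1" using c1 jc by linarith
  have "(- ww - (f + 2)) / 2 = (- ww - f) / 2 - 1" by (simp add: field_simps)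
  then have "\<lceil>(- ww - (f + 2)) / 2\<rceil> = \<lceil>(- ww - f) / 2 - 1\<rceil>" by (simp only:)
  also have "\<dots> = c - 1" unfolding c_def by (rule ceiling_diff_one)
  finally have "\<lceil>(- ww - (f + 2)) / 2\<rceil> = c - 1" .
  then show "jj (f + 2) = jj f - 1" unfolding jc unfolding jj_def by linarith
  have "real (jj f - 1) = of_int c - 1" using jc c1 by (simp add: of_nat_diff)
  moreover have "2 * (of_int c - 1) < 2 * ((- ww - f) / 2)" using cc by (intro mult_strict_left_mono) auto
  ultimately show "- ww - f > 2 * real (jj f - 1)" by simp
qed
lemma jj_le1: "f \<ge> - ww - 2 \<Longrightarrow> jj f \<le> 1"
proof -
  assume "f \<ge> - ww - 2"
  then have "(- ww - f) / 2 \<le> 1" by simp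
  then show ?thesis unfolding jj_def by linarith
qed


definition goodS :: "int \<Rightarrow> real \<Rightarrow> real \<Rightarrow> bool" where
  "goodS q d f \<longleftrightarrow> x \<le> q \<and> q \<le> x + 3 \<and> \<not> (q = x + 1 \<and> d \<le> - C \<and> d + f \<le> - C)
     \<and> \<not> (q = x + 2 \<and> f \<ge> C \<and> d + f \<ge> C)
     \<and> (q = x + 2 \<and> d + f \<le> - C - 1 \<longrightarrow> d > - C - 1)
     \<and> (q = x + 1 \<and> d + f \<ge> C + 1 \<longrightarrow> f < C + 1)"

definition G12 :: "int \<Rightarrow> real \<Rightarrow> real \<Rightarrow> real" where
  "G12 q d f = (if q = x + 1 then
      (if d + f \<le> - C - 1 then min (1/2) (phi1 d)
       else if d + f \<ge> C + 1 then phi2 (- f) (- (d + f))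
       else if d < - ww then lam ^ nA (d + f) / 2
       else min (1/2) (up d * G2M (f + 1) (d + f)))
    else (if d + f \<le> - C - 1 then phi2 d (d + f)
          else if d + f \<ge> C + 1 then min (1/2) (phi1 (- f))
          else G2M f (d + f)))"

definition Gh :: "int \<Rightarrow> real \<Rightarrow> real \<Rightarrow> real" where
  "Gh q d f = (if goodS q d f then G12 q d f else 1)"

definition GG :: "int \<Rightarrow> real \<Rightarrow> real \<Rightarrow> real" where
  "GG q d f = (if q = x then max 0 (th * (min (1/2) (Gh (x + 1) (d + 1) (f - \<alpha>)) - dl))
     else if q = x + 3 then min (1/2) (Gh (x + 2) (d + \<alpha>) (f - 1)) else G12 q d f)"

lemma phi1_half': "d > - C \<Longrightarrow> phi1 d \<le> 1/2"
  using phi1_le_half_up[of d] up_le1[of d] by simp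

lemma delta1_half: "min (1/2) delta1 \<ge> delta1 / 2" using delta1_pos delta1_le1 by simp

lemma G12_bounds:
  assumes g: "goodS q d f" and q: "q = x + 1 \<or> q = x + 2"
  shows "2 * dl \<le> G12 q d f \<and> G12 q d f \<le> 1/2"
proof -
  have tdl: "2 * dl = Gmin" unfolding dl_def by simp
  define S where "S = d + f"
  have upw: "up (- ww) \<le> 1" by (rule up_le1)
  consider (A) "S \<le> - C - 1" | (B) "S \<ge> C + 1" | (M) "- C - 1 < S" "S < C + 1" by linarith
  then show ?thesis
  proof cases
    case A
    show ?thesis using q
    proof
      assume q1: "q = x + 1"
      have "d > - C" using g q1 A unfolding goodS_def S_def by auto
      then have "phi1 d \<le> 1/2" by (rule phi1_half')
      moreover have "phi1 d \<ge> delta1" by (rule phi1_ge)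
      ultimately show ?thesis unfolding G12_def using C_pos q1 A Gmin_le(1) tdl Gmin_pos delta1_le1 unfolding S_def by auto
    next
      assume q2: "q = x + 2"
      have "d > - C - 1" using g q2 A unfolding goodS_def S_def by auto
      then have "phi2 d S \<ge> delta1 / 2" using phi2_ge A by blast
      then show ?thesis unfolding G12_def using C_pos q2 A Gmin_le(1) tdl phi2_le_half unfolding S_def by auto
    qed
  next
    case B
    show ?thesis using q
    proof
      assume q1: "q = x + 1"
      have "f < C + 1" using g q1 B unfolding goodS_def S_def by auto
      then have "phi2 (- f) (- S) \<ge> delta1 / 2" using phi2_ge[of "- f" "- S"] B by simp
      then show ?thesis unfolding G12_def using C_pos q1 B Gmin_le(1) tdl phi2_le_half unfolding S_def by auto
    next
      assume q2: "q = x + 2"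
      have "f < C" using g q2 B C_pos unfolding goodS_def S_def by auto
      have "phi1 (- f) \<ge> delta1" by (rule phi1_ge)
      then have "min (1/2) (phi1 (- f)) \<ge> delta1 / 2" using delta1_half by linarith
      then show ?thesis unfolding G12_def using C_pos q2 B Gmin_le(1) tdl unfolding S_def by auto
    qed
  next
    case M
    have nB: "nB S \<le> NB" using nB_le M by simp
    show ?thesis using q
    proof
      assume q1: "q = x + 1"
      show ?thesis
      proof (cases "d < - ww")
        case True
        have "lam ^ NB \<le> lam ^ nA S" using nA_le[of S] M lam_pos lam_le1 by (intro power_decreasing) auto
        moreover have "lam ^ nA S \<le> 1" using lam_pos lam_le1 by (simp add: power_le_one)
        ultimately show ?thesis unfolding G12_def using C_pos q1 M True Gmin_le(4) tdl unfolding S_def by auto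
      next
        case False
        have "up (- ww) \<le> up d" using False by (intro up_mono) simp
        moreover have "gam ^ NB * delta1 / 4 \<le> G2M (f + 1) S" using G2M_ge nB by simp
        ultimately have "up (- ww) * (gam ^ NB * delta1 / 4) \<le> up d * G2M (f + 1) S"
          using up_pos gam_pos delta1_pos by (intro mult_mono) (auto simp: less_imp_le)
        then have "up (- ww) * gam ^ NB * delta1 / 4 \<le> up d * G2M (f + 1) S" by (simp add: mult.assoc)
        then have "LB1 \<le> min (1/2) (up d * G2M (f + 1) S)" unfolding LB1_def by (meson min.mono order_refl)
        then show ?thesis unfolding G12_def using C_pos q1 M False Gmin_le(3) tdl unfolding S_def by auto
      qed
    next
      assume q2: "q = x + 2"
      have "gam ^ NB * delta1 / 4 \<le> G2M f S" using G2M_ge nB by simp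
      then show ?thesis unfolding G12_def using C_pos q2 M Gmin_le(2) tdl G2M_le[of f S] unfolding S_def by auto
    qed
  qed
qed

lemma phi2_le1: "phi2 a b \<le> 1" using phi2_le_half[of a b] by simp
lemma G2M_le1: "G2M a b \<le> 1" using G2M_le[of a b] by simp
lemma lam_pow_le: "lam ^ n / 2 \<le> 1"
proof -
  have "lam ^ n \<le> 1" using lam_pos lam_le1 by (simp add: power_le_one)
  then show ?thesis by simp
qed

lemma G12_le1: "G12 q d f \<le> 1"
  unfolding G12_def using phi1_le1 phi2_le1 G2M_le1 lam_pow_le
  by (auto simp: min_def)

lemma G12_nonneg: "G12 q d f \<ge> 0"
  unfolding G12_def using phi1_pos phi2_ge0 G2M_pos lam_pos up_pos
  by (auto intro!: mult_nonneg_nonneg simp: less_imp_le)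

lemma Gh_ge: "Gh q d f \<ge> G12 q d f" unfolding Gh_def using G12_le1 by auto
lemma Gh_nonneg: "Gh q d f \<ge> 0" unfolding Gh_def using G12_nonneg by auto

lemma GG_bounds:
  assumes g: "goodS q d f"
  shows "0 \<le> GG q d f \<and> GG q d f \<le> 1/2"
proof -
  have r: "q = x \<or> q = x + 1 \<or> q = x + 2 \<or> q = x + 3" using g unfolding goodS_def by auto
  have thx: "th * (1/2 - dl) \<le> 1/2"
  proof -
    have "th * (1/2 - dl) = (1/2 - dl) / (1 - dl)" unfolding th_def by simp
    also have "\<dots> \<le> 1/2" using dl_pos dl_le by (simp add: field_simps)
    finally show ?thesis .
  qed
  show ?thesis using r
  proof (elim disjE)
    assume q: "q = x"
    let ?m = "min (1/2) (Gh (x + 1) (d + 1) (f - \<alpha>))"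
    have "th * (?m - dl) \<le> th * (1/2 - dl)" using th_pos by (intro mult_left_mono) auto
    then show ?thesis unfolding GG_def using q thx by auto
  next
    assume q: "q = x + 3"
    then show ?thesis unfolding GG_def using Gh_nonneg by auto
  next
    assume q: "q = x + 1"
    then show ?thesis unfolding GG_def using G12_bounds[OF g] dl_pos by auto
  next
    assume q: "q = x + 2"
    then show ?thesis unfolding GG_def using G12_bounds[OF g] dl_pos by auto
  qed
qed


lemma Gh_cases: "q = x + 1 \<or> q = x + 2 \<Longrightarrow> Gh q a b = 1 \<or> (2 * dl \<le> Gh q a b \<and> Gh q a b \<le> 1/2)"
  unfolding Gh_def using G12_bounds by auto

lemma mGh: "q = x + 1 \<or> q = x + 2 \<Longrightarrow> 2 * dl \<le> min (1/2) (Gh q a b)"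
  using Gh_cases[of q a b] dl_le by auto

lemma GGx_ge: "GG x a b \<ge> min (1/2) (Gh (x + 1) (a + 1) (b - \<alpha>)) / 2"
proof -
  let ?m = "min (1/2) (Gh (x + 1) (a + 1) (b - \<alpha>))"
  have m: "2 * dl \<le> ?m" by (rule mGh) simp
  have "?m / 2 \<le> ?m - dl" using m by simp
  also have "\<dots> = 1 * (?m - dl)" by simp
  also have "\<dots> \<le> th * (?m - dl)" using th_ge1 m dl_pos by (intro mult_right_mono) auto
  finally show ?thesis unfolding GG_def by simp
qed

lemma up_half: "a \<ge> 0 \<Longrightarrow> up a \<ge> 1/2" using up_mono[of 0 a] up_zero by simp

lemma G12_x1_M_ge:
  assumes "- C - 1 < d + f" "d + f < C + 1" "d \<ge> - ww"
  shows "G12 (x + 1) d f \<ge> LB1"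
proof -
  have "up (- ww) \<le> up d" using assms by (intro up_mono) simp
  moreover have "gam ^ NB * delta1 / 4 \<le> G2M (f + 1) (d + f)" using G2M_ge nB_le assms by simp
  ultimately have "up (- ww) * (gam ^ NB * delta1 / 4) \<le> up d * G2M (f + 1) (d + f)"
    using up_pos gam_pos delta1_pos by (intro mult_mono) (auto simp: less_imp_le)
  then have "up (- ww) * gam ^ NB * delta1 / 4 \<le> up d * G2M (f + 1) (d + f)" by (simp add: mult.assoc)
  then have "LB1 \<le> min (1/2) (up d * G2M (f + 1) (d + f))" unfolding LB1_def by (meson min.mono order_refl)
  then show ?thesis unfolding G12_def using assms C_pos by auto
qed

lemma ww_pos: "ww > 0" unfolding ww_def using C_pos by simp

lemma L1:
  assumes g: "goodS (x + 1) d f"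
  shows "G12 (x + 1) d f \<le> up d * Gh (x + 2) (d - 1) (f + 1) + up (- d) * GG x (d + 1) (f - \<alpha>)"
proof -
  define S where "S = d + f"
  have e1: "d - 1 + (f + 1) = S" unfolding S_def by simp
  have u0: "0 \<le> up d" "0 \<le> up (- d)" using up_pos less_imp_le by blast+
  have GG0: "0 \<le> GG x (d + 1) (f - \<alpha>)" using GG_bounds[of x "d + 1" "f - \<alpha>"] unfolding goodS_def by simp
  have x12: "x + 2 \<noteq> x + 1" by simp
  have key: "G12 (x + 1) d f \<le> up d * Gh (x + 2) (d - 1) (f + 1) \<or> G12 (x + 1) d f \<le> up (- d) * GG x (d + 1) (f - \<alpha>)"
  proof (cases "S \<le> - C - 1")
    case A: True
    have dC: "d > - C" using g A unfolding goodS_def S_def by auto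
    have gn: "goodS (x + 2) (d - 1) (f + 1)" unfolding goodS_def e1 using A dC C_pos by auto
    have "Gh (x + 2) (d - 1) (f + 1) = phi2 (d - 1) S" unfolding Gh_def G12_def using gn e1 A by simp
    moreover have "G12 (x + 1) d f \<le> phi1 d" unfolding G12_def using A unfolding S_def by simp
    ultimately show ?thesis using phi1_le_phi2[OF dC A] by simp
  next
    case nA: False
    show ?thesis
    proof (cases "S \<ge> C + 1")
      case B: True
      define Y where "Y = (if - f - 1 > - C then phi1 (- f - 1) else 1)"
      have "G12 (x + 1) d f = phi2 (- f) (- S)" unfolding G12_def using nA B unfolding S_def by simp
      also have "\<dots> \<le> up (- f - - S) * Y" using phi2_le[of "- f" "- S"] unfolding Y_def by simp
      also have "up (- f - - S) = up d" unfolding S_def by simp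
      finally have a: "G12 (x + 1) d f \<le> up d * Y" .
      have "Y \<le> Gh (x + 2) (d - 1) (f + 1)"
      proof (cases "f + 1 \<ge> C")
        case True
        then have "\<not> goodS (x + 2) (d - 1) (f + 1)" unfolding goodS_def e1 using B C_pos by auto
        then show ?thesis unfolding Gh_def Y_def using phi1_le1 by auto
      next
        case False
        have gn: "goodS (x + 2) (d - 1) (f + 1)" unfolding goodS_def e1 using B False C_pos by auto
        have fC: "- f - 1 > - C" using False by simp
        have "Gh (x + 2) (d - 1) (f + 1) = min (1/2) (phi1 (- f - 1))"
          unfolding Gh_def G12_def using gn e1 B nA by simp
        also have "\<dots> = phi1 (- f - 1)" using phi1_half'[OF fC] by simp
        finally show ?thesis unfolding Y_def using fC by simp
      qed
      then show ?thesis using a u0 by (meson mult_left_mono order_trans)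
    next
      case nB: False
      show ?thesis
      proof (cases "d < - ww")
        case True
        let ?r = "Gh (x + 1) (d + 1 + 1) (f - \<alpha> - \<alpha>)"
        let ?m = "min (1/2) ?r"
        have e2: "d + 1 + 1 + (f - \<alpha> - \<alpha>) = S - eta" unfolding S_def eta_def by simp
        have G: "G12 (x + 1) d f = lam ^ nA S / 2" unfolding G12_def using nA nB True unfolding S_def by simp
        have n1: "nA S \<ge> 1" using nA_ge1 nA by simp
        obtain k where k: "nA S = Suc k" using n1 by (cases "nA S") auto
        have "lam ^ k \<le> 1" using lam_pos lam_le1 by (simp add: power_le_one)
        then have lp: "lam ^ nA S \<le> lam" unfolding k using lam_pos by (simp add: mult_left_le)
        have mm: "2 * lam ^ nA S \<le> ?m"
        proof (cases "goodS (x + 1) (d + 1 + 1) (f - \<alpha> - \<alpha>)")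
          case False
          then show ?thesis unfolding Gh_def using lp lam_le by simp
        next
          case gr: True
          have Gr: "?r = G12 (x + 1) (d + 1 + 1) (f - \<alpha> - \<alpha>)" unfolding Gh_def using gr by simp
          have Gr2: "?r \<le> 1/2" using G12_bounds[OF gr] Gr by simp
          have "2 * lam ^ nA S \<le> ?r"
          proof (cases "S - eta \<le> - C - 1")
            case A': True
            have "?r = min (1/2) (phi1 (d + 1 + 1))" unfolding Gr G12_def e2 using A' by simp
            moreover have "phi1 (d + 1 + 1) \<ge> delta1" by (rule phi1_ge)
            ultimately show ?thesis using lp lam_le by linarith
          next
            case False
            have sB: "\<not> S - eta \<ge> C + 1" using nB eta_pos by simp
            show ?thesis
            proof (cases "d + 1 + 1 < - ww")
              case True
              have "?r = lam ^ nA (S - eta) / 2" unfolding Gr G12_def e2 using False sB True by simp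
              also have "nA (S - eta) = nA S - 1" by (rule nA_shift)
              finally have r: "?r = lam ^ (nA S - 1) / 2" .
              have "lam ^ nA S = lam * lam ^ (nA S - 1)" unfolding k by simp
              moreover have "lam * lam ^ (nA S - 1) \<le> (1/8) * lam ^ (nA S - 1)"
                using lam_le lam_pos by (intro mult_right_mono) auto
              moreover have "0 \<le> lam ^ (nA S - 1)" using lam_pos by simp
              ultimately show ?thesis unfolding r by linarith
            next
              case False': False
              have "G12 (x + 1) (d + 1 + 1) (f - \<alpha> - \<alpha>) \<ge> LB1"
                by (rule G12_x1_M_ge) (use False sB False' e2 in auto)
              then show ?thesis unfolding Gr using lp lam_le by linarith
            qed
          qed
          then show ?thesis using Gr2 by simp
        qed
        have "GG x (d + 1) (f - \<alpha>) \<ge> ?m / 2" using GGx_ge[of "d + 1" "f - \<alpha>"] by simp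
        moreover have "up (- d) \<ge> 1/2" using True ww_pos by (intro up_half) simp
        ultimately have "up (- d) * GG x (d + 1) (f - \<alpha>) \<ge> 1/2 * (?m / 2)"
          using mGh[of "x + 1" "d + 1 + 1" "f - \<alpha> - \<alpha>"] dl_pos by (intro mult_mono) auto
        then have "G12 (x + 1) d f \<le> up (- d) * GG x (d + 1) (f - \<alpha>)" using G mm by linarith
        then show ?thesis by simp
      next
        case False
        have "G12 (x + 1) d f \<le> up d * G2M (f + 1) S" unfolding G12_def using nA nB False unfolding S_def by simp
        moreover have "G2M (f + 1) S \<le> Gh (x + 2) (d - 1) (f + 1)"
        proof (cases "goodS (x + 2) (d - 1) (f + 1)")
          case True
          then show ?thesis unfolding Gh_def G12_def e1 using nA nB by simp
        next
          case False
          then show ?thesis unfolding Gh_def using G2M_le1 by simp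
        qed
        ultimately show ?thesis using u0 by (meson mult_left_mono order_trans)
      qed
    qed
  qed
  have p1: "0 \<le> up d * Gh (x + 2) (d - 1) (f + 1)" using u0 Gh_nonneg by simp
  have p2: "0 \<le> up (- d) * GG x (d + 1) (f - \<alpha>)" using u0 GG0 by simp
  show ?thesis using key p1 p2 by linarith
qed


lemma L2:
  assumes g: "goodS (x + 2) d f"
  shows "G12 (x + 2) d f \<le> up f * GG (x + 3) (d + \<alpha>) (f - 1) + up (- f) * Gh (x + 1) (d - 1) (f + 1)"
proof -
  define S where "S = d + f"
  have e1: "d - 1 + (f + 1) = S" unfolding S_def by simp
  have u0: "0 \<le> up f" "0 \<le> up (- f)" using up_pos less_imp_le by blast+
  have x12: "x + 2 \<noteq> x + 1" "x + 3 \<noteq> x" by simp_all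
  have GG3: "GG (x + 3) (d + \<alpha>) (f - 1) = min (1/2) (Gh (x + 2) (d + \<alpha> + \<alpha>) (f - 1 - 1))"
    unfolding GG_def by simp
  have GG0: "0 \<le> GG (x + 3) (d + \<alpha>) (f - 1)" unfolding GG3 using Gh_nonneg by simp
  have key: "G12 (x + 2) d f \<le> up (- f) * Gh (x + 1) (d - 1) (f + 1) \<or> G12 (x + 2) d f \<le> up f * GG (x + 3) (d + \<alpha>) (f - 1)"
  proof (cases "S \<le> - C - 1")
    case A: True
    have dC: "d > - C - 1" using g A unfolding goodS_def S_def by auto
    define Y where "Y = (if d - 1 > - C then phi1 (d - 1) else 1)"
    have "G12 (x + 2) d f = phi2 d S" unfolding G12_def using A unfolding S_def by simp
    also have "\<dots> \<le> up (d - S) * Y" using phi2_le[of d S] unfolding Y_def by simp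
    also have "up (d - S) = up (- f)" unfolding S_def by simp
    finally have a: "G12 (x + 2) d f \<le> up (- f) * Y" .
    have "Y \<le> Gh (x + 1) (d - 1) (f + 1)"
    proof (cases "d - 1 > - C")
      case False
      then have "\<not> goodS (x + 1) (d - 1) (f + 1)" unfolding goodS_def e1 using A C_pos by auto
      then show ?thesis unfolding Gh_def Y_def using phi1_le1 by auto
    next
      case True
      have gn: "goodS (x + 1) (d - 1) (f + 1)" unfolding goodS_def e1 using A True C_pos by auto
      have "Gh (x + 1) (d - 1) (f + 1) = min (1/2) (phi1 (d - 1))" unfolding Gh_def G12_def using gn e1 A by simp
      also have "\<dots> = phi1 (d - 1)" using phi1_half'[OF True] by simp
      finally show ?thesis unfolding Y_def using True by simp
    qed
    then show ?thesis using a u0 by (meson mult_left_mono order_trans)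
  next
    case nA: False
    show ?thesis
    proof (cases "S \<ge> C + 1")
      case B: True
      have fC: "f < C" using g B C_pos unfolding goodS_def S_def by auto
      have fC': "- f > - C" using fC by simp
      have S': "- S \<le> - C - 1" using B by simp
      have "G12 (x + 2) d f \<le> phi1 (- f)" unfolding G12_def using nA B unfolding S_def by simp
      also have "\<dots> \<le> up (- f) * phi2 (- f - 1) (- S)" using phi1_le_phi2[OF fC' S'] .
      also have "phi2 (- f - 1) (- S) = Gh (x + 1) (d - 1) (f + 1)"
      proof -
        have gn: "goodS (x + 1) (d - 1) (f + 1)" unfolding goodS_def e1 using B fC C_pos by auto
        show ?thesis unfolding Gh_def G12_def using gn e1 B nA by simp
      qed
      finally show ?thesis by simp
    next
      case nB: False
      have nB1: "nB S \<ge> 1" using nB_ge1 nB by simp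
      show ?thesis
      proof (cases "f \<ge> - ww")
        case True
        let ?r = "Gh (x + 2) (d + \<alpha> + \<alpha>) (f - 1 - 1)"
        have e2: "d + \<alpha> + \<alpha> + (f - 1 - 1) = S + eta" unfolding S_def eta_def by simp
        have G: "G12 (x + 2) d f = gam ^ nB S / 4" unfolding G12_def G2M_def using nA nB jj_zero[OF True]
          unfolding S_def by (simp add: Phi_def)
        obtain k where k: "nB S = Suc k" using nB1 by (cases "nB S") auto
        have gk: "gam ^ k \<le> 1" using gam_pos gam_le1 by (simp add: power_le_one)
        have gp: "gam ^ nB S \<le> gam" unfolding k using gam_pos gk by (simp add: mult_left_le)
        have uf: "up (- ww) \<le> up f" using True by (intro up_mono) simp
        have "gam ^ nB S / 4 \<le> up (- ww) * min (1/2) ?r"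
        proof (cases "goodS (x + 2) (d + \<alpha> + \<alpha>) (f - 1 - 1)")
          case False
          then have "min (1/2) ?r = 1/2" unfolding Gh_def by simp
          moreover have "gam / 4 \<le> up (- ww) * (1/2)" unfolding gam_def using delta1_le1 up_pos[of "- ww"] delta1_pos
            by (simp add: field_simps mult_left_le)
          ultimately show ?thesis using gp by simp
        next
          case gr: True
          have Gr: "?r = G12 (x + 2) (d + \<alpha> + \<alpha>) (f - 1 - 1)" unfolding Gh_def using gr by simp
          have Gr2: "?r \<le> 1/2" using G12_bounds[OF gr] Gr by simp
          have sA: "\<not> S + eta \<le> - C - 1" using nA eta_pos by simp
          show ?thesis
          proof (cases "S + eta \<ge> C + 1")
            case True
            have "?r = min (1/2) (phi1 (- (f - 1 - 1)))" unfolding Gr G12_def e2 using sA True by simp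
            moreover have "phi1 (- (f - 1 - 1)) \<ge> delta1" by (rule phi1_ge)
            ultimately have "?r \<ge> delta1 / 2" using delta1_half by linarith
            then have "min (1/2) ?r \<ge> delta1 / 2" using Gr2 by simp
            moreover have "gam / 4 \<le> up (- ww) * (delta1 / 2)" unfolding gam_def using up_pos[of "- ww"] delta1_pos
              by (simp add: field_simps)
            moreover have "up (- ww) * (delta1 / 2) \<le> up (- ww) * min (1/2) ?r"
              using calculation(1) up_pos[of "- ww"] by (intro mult_left_mono) auto
            ultimately show ?thesis using gp by linarith
          next
            case False
            have "?r = G2M (f - 1 - 1) (S + eta)" unfolding Gr G12_def e2 using sA False by simp
            also have "\<dots> = gam ^ k / 4 * Phi (jj (f - 1 - 1))" unfolding G2M_def nB_shift k by simp
            finally have r: "?r = gam ^ k / 4 * Phi (jj (f - 1 - 1))" .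
            have "jj (f - 1 - 1) \<le> 1" using True by (intro jj_le1) simp
            then have "Phi 1 \<le> Phi (jj (f - 1 - 1))" by (rule Phi_anti)
            then have ph: "rho 0 \<le> Phi (jj (f - 1 - 1))" by (simp add: Phi_def)
            have "gam ^ nB S / 4 = gam * (gam ^ k / 4)" unfolding k by simp
            also have "\<dots> \<le> (up (- ww) * rho 0) * (gam ^ k / 4)" using gam_le_rho0 gam_pos
              by (intro mult_right_mono) auto
            also have "\<dots> \<le> up (- ww) * (gam ^ k / 4 * Phi (jj (f - 1 - 1)))"
              using ph up_pos[of "- ww"] gam_pos by (simp add: mult_left_mono mult.assoc mult.left_commute)
            also have "\<dots> = up (- ww) * min (1/2) ?r" using Gr2 r by simp
            finally show ?thesis .
          qed
        qed
        also have "\<dots> \<le> up f * min (1/2) ?r" using uf Gh_nonneg[of "x + 2" "d + \<alpha> + \<alpha>" "f - 1 - 1"]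
          by (intro mult_right_mono) auto
        finally show ?thesis using G GG3 by simp
      next
        case False
        have G: "G12 (x + 2) d f = gam ^ nB S / 4 * Phi (jj f)" unfolding G12_def G2M_def using nA nB
          unfolding S_def by simp
        have fw: "f < - ww" using False by simp
        have j1: "jj f \<ge> 1" and j2: "jj (f + 2) = jj f - 1" and j3: "- ww - f > 2 * real (jj f - 1)"
          using jj_facts[OF fw] by auto
        have dpos: "d - 1 > 0" using nA fw unfolding S_def ww_def by simp
        have gn: "goodS (x + 1) (d - 1) (f + 1)" unfolding goodS_def e1 using nB dpos C_pos by auto
        have f2: "f + 1 + 1 = f + 2" by simp
        have Gh1: "Gh (x + 1) (d - 1) (f + 1) = min (1/2) (up (d - 1) * G2M (f + 2) S)"
          unfolding Gh_def G12_def using gn e1 nA nB dpos ww_pos f2 by (simp add: add.commute)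
        obtain j where jd: "jj f = Suc j" using j1 by (cases "jj f") auto
        have Gj: "G12 (x + 2) d f = gam ^ nB S / 4 * (rho j * Phi j)" unfolding G jd Phi_Suc ..
        have G2j: "G2M (f + 2) S = gam ^ nB S / 4 * Phi j" unfolding G2M_def j2 jd by simp
        have a1: "- f \<ge> 2 * real j" using j3 ww_pos jd by simp
        have a2: "d - 1 \<ge> 2 * real j" using j3 jd nA unfolding S_def ww_def by simp
        have rj: "rho j \<le> up (- f) * up (d - 1)" by (rule rho_le_upup[OF a1 a2])
        have i2: "G12 (x + 2) d f \<le> up (- f) * (up (d - 1) * G2M (f + 2) S)"
        proof -
          have "G12 (x + 2) d f = rho j * (gam ^ nB S / 4 * Phi j)" unfolding Gj by simp
          also have "\<dots> \<le> (up (- f) * up (d - 1)) * (gam ^ nB S / 4 * Phi j)"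
            using rj gam_pos Phi_pos[of j] by (intro mult_right_mono) auto
          finally show ?thesis unfolding G2j by (simp add: mult.assoc)
        qed
        have i1: "G12 (x + 2) d f \<le> up (- f) * (1/2)"
        proof -
          have "G12 (x + 2) d f \<le> 1/4" using G G2M_le[of f S] unfolding G2M_def by simp
          moreover have "up (- f) \<ge> 1/2" using fw ww_pos by (intro up_half) simp
          ultimately show ?thesis by simp
        qed
        have "up (- f) * Gh (x + 1) (d - 1) (f + 1) = min (up (- f) * (1/2)) (up (- f) * (up (d - 1) * G2M (f + 2) S))"
          unfolding Gh1 min_mult_distrib_left using u0 by simp
        then show ?thesis using i1 i2 by simp
      qed
    qed
  qed
  have p1: "0 \<le> up (- f) * Gh (x + 1) (d - 1) (f + 1)" using u0 Gh_nonneg by simp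
  have p2: "0 \<le> up f * GG (x + 3) (d + \<alpha>) (f - 1)" using u0 GG0 by simp
  show ?thesis using key p1 p2 by linarith
qed

lemma Lx:
  assumes "0 \<le> P" "P \<le> 1"
  shows "P * th * (1 - Gh (x + 1) (d + 1) (f - \<alpha>)) \<le> 1 - GG x d f"
proof -
  let ?g = "Gh (x + 1) (d + 1) (f - \<alpha>)"
  have GGx: "GG x d f = max 0 (th * (min (1/2) ?g - dl))" unfolding GG_def by simp
  consider "?g = 1" | "2 * dl \<le> ?g" "?g \<le> 1/2" using Gh_cases[of "x + 1"] by auto
  then show ?thesis
  proof cases
    case 1
    have "GG x d f \<le> 1/2" using GG_bounds[of x d f] unfolding goodS_def by simp
    then show ?thesis using 1 by simp
  next
    case 2
    have "GG x d f = th * (?g - dl)" unfolding GGx using 2 th_pos dl_pos by simp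
    then have "1 - GG x d f = th * (1 - ?g)" using th_mult by (simp add: algebra_simps)
    moreover have "P * th * (1 - ?g) \<le> 1 * th * (1 - ?g)" using assms 2 th_pos
      by (intro mult_right_mono) auto
    ultimately show ?thesis by simp
  qed
qed

lemma Lx3:
  assumes "0 \<le> P" "P \<le> 1"
  shows "P * (1 - Gh (x + 2) (d + \<alpha>) (f - 1)) \<le> 1 - GG (x + 3) d f"
proof -
  let ?g = "Gh (x + 2) (d + \<alpha>) (f - 1)"
  have GG3: "GG (x + 3) d f = min (1/2) ?g" unfolding GG_def by simp
  consider "?g = 1" | "2 * dl \<le> ?g" "?g \<le> 1/2" using Gh_cases[of "x + 2"] by auto
  then show ?thesis
  proof cases
    case 1 then show ?thesis unfolding GG3 by simp
  next
    case 2
    then have "GG (x + 3) d f = ?g" unfolding GG3 by simp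
    moreover have "P * (1 - ?g) \<le> 1 * (1 - ?g)" using assms 2 by (intro mult_right_mono) auto
    ultimately show ?thesis by simp
  qed
qed

end

context wsetup begin

definition D1 :: "(nat \<Rightarrow> int) \<Rightarrow> nat \<Rightarrow> real" where "D1 p k = Delta \<alpha> p k (x + 1)"
definition D2 :: "(nat \<Rightarrow> int) \<Rightarrow> nat \<Rightarrow> real" where "D2 p k = Delta \<alpha> p k (x + 2)"
definition SS :: "(nat \<Rightarrow> int) \<Rightarrow> nat \<Rightarrow> real" where "SS p k = D1 p k + D2 p k"
definition condA :: "(nat \<Rightarrow> int) \<Rightarrow> nat \<Rightarrow> bool" where
  "condA p k \<longleftrightarrow> p k = x + 1 \<and> D1 p k \<le> - C \<and> SS p k \<le> - C"
definition condB :: "(nat \<Rightarrow> int) \<Rightarrow> nat \<Rightarrow> bool" where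
  "condB p k \<longleftrightarrow> p k = x + 2 \<and> D2 p k \<ge> C \<and> SS p k \<ge> C"
definition good :: "(nat \<Rightarrow> int) \<Rightarrow> nat \<Rightarrow> bool" where
  "good p k \<longleftrightarrow> goodS (p k) (D1 p k) (D2 p k)"
definition bad :: "nat \<Rightarrow> (nat \<Rightarrow> int) \<Rightarrow> nat \<Rightarrow> bool" where
  "bad T p n \<longleftrightarrow> (\<forall>k. T \<le> k \<and> k \<le> n \<longrightarrow> good p k)"
definition arr :: "(nat \<Rightarrow> int) \<Rightarrow> nat \<Rightarrow> bool" where
  "arr p j \<longleftrightarrow> p j = x \<and> p (Suc j) = x + 1"
definition kc :: "nat \<Rightarrow> (nat \<Rightarrow> int) \<Rightarrow> nat \<Rightarrow> nat" where
  "kc T p n = card {j. T \<le> j \<and> j < n \<and> arr p j}"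
definition VV :: "(nat \<Rightarrow> int) \<Rightarrow> nat \<Rightarrow> real" where
  "VV p n = 1 - GG (p n) (D1 p n) (D2 p n)"
definition ZZ :: "nat \<Rightarrow> (nat \<Rightarrow> int) \<Rightarrow> nat \<Rightarrow> real" where
  "ZZ T p n = (if n < T then 1 else if bad T p n then th ^ kc T p n * VV p n else 0)"

lemma good_alt: "good p k \<longleftrightarrow> x \<le> p k \<and> p k \<le> x + 3 \<and> \<not> condA p k \<and> \<not> condB p k
   \<and> (p k = x + 2 \<and> SS p k \<le> - C - 1 \<longrightarrow> D1 p k > - C - 1)
   \<and> (p k = x + 1 \<and> SS p k \<ge> C + 1 \<longrightarrow> D2 p k < C + 1)"
  unfolding good_def goodS_def condA_def condB_def SS_def by auto

lemma VV_ge: "good p n \<Longrightarrow> VV p n \<ge> 1/2"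
  unfolding VV_def good_def using GG_bounds by fastforce
lemma VV_le1: "good p n \<Longrightarrow> VV p n \<le> 1"
  unfolding VV_def good_def using GG_bounds by fastforce

lemma ZZ_ge0: "ZZ T p n \<ge> 0"
proof (cases "\<not> n < T \<and> bad T p n")
  case True
  then have "good p n" unfolding bad_def by auto
  then have "VV p n \<ge> 0" using VV_ge[of p n] by simp
  then show ?thesis unfolding ZZ_def using True th_pos by simp
qed (auto simp: ZZ_def)

lemma good_cong: "(\<And>i. i \<le> k \<Longrightarrow> p i = q i) \<Longrightarrow> good p k = good q k"
  unfolding good_def D1_def D2_def using Delta_cong[of k p q] by auto

lemma bad_ext: "bad T (p(Suc N := v)) (Suc N) \<longleftrightarrow> bad T p N \<and> (T \<le> Suc N \<longrightarrow> good (p(Suc N := v)) (Suc N))"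
proof -
  have g: "k \<le> N \<Longrightarrow> good (p(Suc N := v)) k = good p k" for k
    by (rule good_cong) auto
  show ?thesis unfolding bad_def using g by (auto simp: le_Suc_eq)
qed

lemma kc_le: "N \<le> T \<Longrightarrow> kc T p N = 0" unfolding kc_def by auto

lemma kc_ext: "kc T (p(Suc N := v)) (Suc N) = kc T p N + (if T \<le> N \<and> arr (p(Suc N := v)) N then 1 else 0)"
proof -
  let ?q = "p(Suc N := v)"
  have a: "j < N \<Longrightarrow> arr ?q j = arr p j" for j unfolding arr_def by auto
  have "{j. T \<le> j \<and> j < Suc N \<and> arr ?q j} = {j. T \<le> j \<and> j < N \<and> arr p j} \<union> (if T \<le> N \<and> arr ?q N then {N} else {})"
    using a by (auto simp: less_Suc_eq)
  then show ?thesis unfolding kc_def by (simp add: card_insert_if)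
qed

lemma arr_ext: "arr (p(Suc N := v)) N \<longleftrightarrow> p N = x \<and> v = x + 1"
  unfolding arr_def by simp

lemma D1_ext:
  assumes "v = p N + 1 \<and> e = p N + 1 \<or> v = p N - 1 \<and> e = p N"
  shows "D1 (p(Suc N := v)) (Suc N) = D1 p N
     - \<alpha> * (if x = e then 1 else 0) + (if x + 1 = e then 1 else 0)
     - (if x + 2 = e then 1 else 0) + \<alpha> * (if x + 3 = e then 1 else 0)"
  unfolding D1_def Delta_ext[where v=v and p=p and N=N and e=e, OF assms] by (simp add: algebra_simps)

lemma D2_ext:
  assumes "v = p N + 1 \<and> e = p N + 1 \<or> v = p N - 1 \<and> e = p N"
  shows "D2 (p(Suc N := v)) (Suc N) = D2 p N
     - \<alpha> * (if x + 1 = e then 1 else 0) + (if x + 2 = e then 1 else 0)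
     - (if x + 3 = e then 1 else 0) + \<alpha> * (if x + 4 = e then 1 else 0)"
  unfolding D2_def Delta_ext[where v=v and p=p and N=N and e=e, OF assms] by (simp add: algebra_simps)

lemma ZZ_ext:
  assumes "T \<le> N" "bad T p N"
  shows "ZZ T (p(Suc N := v)) (Suc N) = (if goodS v (D1 (p(Suc N := v)) (Suc N)) (D2 (p(Suc N := v)) (Suc N)) then
           th ^ (kc T p N + (if p N = x \<and> v = x + 1 then 1 else 0)) * (1 - GG v (D1 (p(Suc N := v)) (Suc N)) (D2 (p(Suc N := v)) (Suc N))) else 0)"
  unfolding ZZ_def VV_def using assms by (simp add: bad_ext kc_ext arr_ext good_def)

lemma goodS_x: "goodS x d f" unfolding goodS_def by simp
lemma goodS_x3: "goodS (x + 3) d f" unfolding goodS_def by simp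
lemma Gh_12: "q = x + 1 \<or> q = x + 2 \<Longrightarrow> (if goodS q d f then 1 - GG q d f else 0) = 1 - Gh q d f"
  unfolding Gh_def GG_def by auto

lemma if_mult0: "(if P then c * A else (0::real)) = c * (if P then A else 0)" by simp

lemma super:
  "up (Delta \<alpha> p N (p N)) * ZZ T (p(Suc N := p N + 1)) (Suc N)
   + up (- Delta \<alpha> p N (p N)) * ZZ T (p(Suc N := p N - 1)) (Suc N) \<le> ZZ T p N"
proof -
  define D where "D = Delta \<alpha> p N (p N)"
  define q1 where "q1 = p(Suc N := p N + 1)"
  define q0 where "q0 = p(Suc N := p N - 1)"
  have u1: "0 \<le> up D" "0 \<le> up (- D)" using up_pos less_imp_le by blast+
  have us: "up D + up (- D) = 1" by (rule up_sum)
  have "up D * ZZ T q1 (Suc N) + up (- D) * ZZ T q0 (Suc N) \<le> ZZ T p N"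
  proof (cases "N < T")
    case True
    have b1: "ZZ T q n \<le> 1" if "n \<le> T" for q n
    proof (cases "n < T")
      case True then show ?thesis unfolding ZZ_def by simp
    next
      case False
      then have "n = T" using that by simp
      then show ?thesis unfolding ZZ_def using kc_le[of n T q] VV_le1[of q n] bad_def by auto
    qed
    have "up D * ZZ T q1 (Suc N) + up (- D) * ZZ T q0 (Suc N) \<le> up D * 1 + up (- D) * 1"
      using b1[of "Suc N"] True u1 by (intro add_mono mult_left_mono) auto
    also have "\<dots> = ZZ T p N" using us True unfolding ZZ_def by simp
    finally show ?thesis .
  next
    case False
    then have TN: "T \<le> N" by simp
    show ?thesis
    proof (cases "bad T p N")
      case False
      then have "ZZ T q1 (Suc N) = 0" "ZZ T q0 (Suc N) = 0" "ZZ T p N = 0"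
        unfolding ZZ_def q1_def q0_def using TN by (auto simp: bad_ext)
      then show ?thesis by simp
    next
      case True
      define k where "k = kc T p N"
      define d where "d = D1 p N"
      define f where "f = D2 p N"
      have gp: "good p N" using True TN unfolding bad_def by auto
      have gS: "goodS (p N) d f" using gp unfolding good_def d_def f_def .
      have range: "p N = x \<or> p N = x + 1 \<or> p N = x + 2 \<or> p N = x + 3" using gS unfolding goodS_def by auto
      have Zp: "ZZ T p N = th ^ k * (1 - GG (p N) d f)" unfolding ZZ_def k_def VV_def d_def f_def using True TN by simp
      have thk: "th ^ k > 0" using th_pos by simp
      have e1: "p N + 1 = p N + 1 \<and> p N + 1 = p N + 1 \<or> p N + 1 = p N - 1 \<and> p N + 1 = p N" by simp
      have e0: "p N - 1 = p N + 1 \<and> p N = p N + 1 \<or> p N - 1 = p N - 1 \<and> p N = p N" by simp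
      have D1q1: "D1 q1 (Suc N) = d
         - \<alpha> * (if x = p N + 1 then 1 else 0) + (if x + 1 = p N + 1 then 1 else 0)
         - (if x + 2 = p N + 1 then 1 else 0) + \<alpha> * (if x + 3 = p N + 1 then 1 else 0)"
        unfolding q1_def d_def by (rule D1_ext[where v="p N + 1" and p=p and N=N and e="p N + 1", OF e1])
      have D2q1: "D2 q1 (Suc N) = f
         - \<alpha> * (if x + 1 = p N + 1 then 1 else 0) + (if x + 2 = p N + 1 then 1 else 0)
         - (if x + 3 = p N + 1 then 1 else 0) + \<alpha> * (if x + 4 = p N + 1 then 1 else 0)"
        unfolding q1_def f_def by (rule D2_ext[where v="p N + 1" and p=p and N=N and e="p N + 1", OF e1])
      have D1q0: "D1 q0 (Suc N) = d
         - \<alpha> * (if x = p N then 1 else 0) + (if x + 1 = p N then 1 else 0)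
         - (if x + 2 = p N then 1 else 0) + \<alpha> * (if x + 3 = p N then 1 else 0)"
        unfolding q0_def d_def by (rule D1_ext[where v="p N - 1" and p=p and N=N and e="p N", OF e0])
      have D2q0: "D2 q0 (Suc N) = f
         - \<alpha> * (if x + 1 = p N then 1 else 0) + (if x + 2 = p N then 1 else 0)
         - (if x + 3 = p N then 1 else 0) + \<alpha> * (if x + 4 = p N then 1 else 0)"
        unfolding q0_def f_def by (rule D2_ext[where v="p N - 1" and p=p and N=N and e="p N", OF e0])
      have Zq1: "ZZ T q1 (Suc N) = (if goodS (p N + 1) (D1 q1 (Suc N)) (D2 q1 (Suc N)) then
           th ^ (k + (if p N = x then 1 else 0)) * (1 - GG (p N + 1) (D1 q1 (Suc N)) (D2 q1 (Suc N))) else 0)"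
        unfolding q1_def k_def using ZZ_ext[OF TN True, of "p N + 1"] by simp
      have Zq0: "ZZ T q0 (Suc N) = (if goodS (p N - 1) (D1 q0 (Suc N)) (D2 q0 (Suc N)) then
           th ^ k * (1 - GG (p N - 1) (D1 q0 (Suc N)) (D2 q0 (Suc N))) else 0)"
        unfolding q0_def k_def using ZZ_ext[OF TN True, of "p N - 1"] by simp
      consider "p N = x" | "p N = x + 1" | "p N = x + 2" | "p N = x + 3" using range by blast
      then show ?thesis
      proof cases
        case 1
        have z0: "ZZ T q0 (Suc N) = 0" unfolding Zq0 using 1 unfolding goodS_def by simp
        have a1: "D1 q1 (Suc N) = d + 1" "D2 q1 (Suc N) = f - \<alpha>" unfolding D1q1 D2q1 using 1 by simp_all
        have "ZZ T q1 (Suc N) = (if goodS (x + 1) (d + 1) (f - \<alpha>) then th ^ (k + 1) * (1 - GG (x + 1) (d + 1) (f - \<alpha>)) else 0)"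
          unfolding Zq1 a1 using 1 by simp
        also have "\<dots> = th ^ (k + 1) * (if goodS (x + 1) (d + 1) (f - \<alpha>) then 1 - GG (x + 1) (d + 1) (f - \<alpha>) else 0)"
          by simp
        also have "\<dots> = th ^ k * (th * (1 - Gh (x + 1) (d + 1) (f - \<alpha>)))"
          unfolding Gh_12[of "x + 1" "d + 1" "f - \<alpha>", simplified] by (simp add: mult.assoc)
        finally have z1: "ZZ T q1 (Suc N) = th ^ k * (th * (1 - Gh (x + 1) (d + 1) (f - \<alpha>)))" .
        have "up D * ZZ T q1 (Suc N) = th ^ k * (up D * th * (1 - Gh (x + 1) (d + 1) (f - \<alpha>)))"
          unfolding z1 by (simp add: algebra_simps)
        also have "\<dots> \<le> th ^ k * (1 - GG x d f)" using Lx[of "up D" d f] u1 up_le1[of D] thk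
          by (intro mult_left_mono) auto
        finally show ?thesis using z0 Zp 1 by simp
      next
        case 4
        have z1: "ZZ T q1 (Suc N) = 0" unfolding Zq1 using 4 unfolding goodS_def by simp
        have a0: "D1 q0 (Suc N) = d + \<alpha>" "D2 q0 (Suc N) = f - 1" unfolding D1q0 D2q0 using 4 by simp_all
        have v: "p N - 1 = x + 2" using 4 by simp
        have z0: "ZZ T q0 (Suc N) = th ^ k * (1 - Gh (x + 2) (d + \<alpha>) (f - 1))"
          unfolding Zq0 a0 v if_mult0 Gh_12[of "x + 2" "d + \<alpha>" "f - 1", simplified] ..
        have "up (- D) * ZZ T q0 (Suc N) = th ^ k * (up (- D) * (1 - Gh (x + 2) (d + \<alpha>) (f - 1)))"
          unfolding z0 by (simp add: algebra_simps)
        also have "\<dots> \<le> th ^ k * (1 - GG (x + 3) d f)" using Lx3[of "up (- D)" d f] u1 up_le1[of "- D"] thk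
          by (intro mult_left_mono) auto
        finally show ?thesis using z1 Zp 4 by simp
      next
        case 2
        have Dd: "D = d" unfolding D_def d_def D1_def using 2 by simp
        have a1: "D1 q1 (Suc N) = d - 1" "D2 q1 (Suc N) = f + 1" unfolding D1q1 D2q1 using 2 by simp_all
        have a0: "D1 q0 (Suc N) = d + 1" "D2 q0 (Suc N) = f - \<alpha>" unfolding D1q0 D2q0 using 2 by simp_all
        have v1: "p N + 1 = x + 2" using 2 by simp
        have z1: "ZZ T q1 (Suc N) = th ^ k * (1 - Gh (x + 2) (d - 1) (f + 1))"
          unfolding Zq1 a1 v1 if_mult0 Gh_12[of "x + 2" "d - 1" "f + 1", simplified] using 2 by simp
        have v0: "p N - 1 = x" using 2 by simp
        have z0: "ZZ T q0 (Suc N) = th ^ k * (1 - GG x (d + 1) (f - \<alpha>))"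
          unfolding Zq0 a0 v0 using goodS_x by simp
        have "up D * ZZ T q1 (Suc N) + up (- D) * ZZ T q0 (Suc N)
            = th ^ k * ((up d + up (- d)) - (up d * Gh (x + 2) (d - 1) (f + 1) + up (- d) * GG x (d + 1) (f - \<alpha>)))"
          unfolding z1 z0 Dd by (simp add: algebra_simps)
        also have "\<dots> \<le> th ^ k * (1 - G12 (x + 1) d f)"
          using L1[of d f] gS 2 thk up_sum[of d] by (intro mult_left_mono) auto
        also have "\<dots> = ZZ T p N" unfolding Zp using 2 unfolding GG_def by simp
        finally show ?thesis .
      next
        case 3
        have Df: "D = f" unfolding D_def f_def D2_def using 3 by simp
        have a1: "D1 q1 (Suc N) = d + \<alpha>" "D2 q1 (Suc N) = f - 1" unfolding D1q1 D2q1 using 3 by simp_all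
        have a0: "D1 q0 (Suc N) = d - 1" "D2 q0 (Suc N) = f + 1" unfolding D1q0 D2q0 using 3 by simp_all
        have v1: "p N + 1 = x + 3" using 3 by simp
        have z1: "ZZ T q1 (Suc N) = th ^ k * (1 - GG (x + 3) (d + \<alpha>) (f - 1))"
          unfolding Zq1 a1 v1 using 3 goodS_x3 by simp
        have v0: "p N - 1 = x + 1" using 3 by simp
        have z0: "ZZ T q0 (Suc N) = th ^ k * (1 - Gh (x + 1) (d - 1) (f + 1))"
          unfolding Zq0 a0 v0 if_mult0 Gh_12[of "x + 1" "d - 1" "f + 1", simplified] ..
        have "up D * ZZ T q1 (Suc N) + up (- D) * ZZ T q0 (Suc N)
            = th ^ k * ((up f + up (- f)) - (up f * GG (x + 3) (d + \<alpha>) (f - 1) + up (- f) * Gh (x + 1) (d - 1) (f + 1)))"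
          unfolding z1 z0 Df by (simp add: algebra_simps)
        also have "\<dots> \<le> th ^ k * (1 - G12 (x + 2) d f)"
          using L2[of d f] gS 3 thk up_sum[of f] by (intro mult_left_mono) auto
        also have "\<dots> = ZZ T p N" unfolding Zp using 3 unfolding GG_def by simp
        finally show ?thesis .
      qed
    qed
  qed
  then show ?thesis unfolding D_def q1_def q0_def .
qed

end

context wsetup begin

lemma step_nonneg: "step_prob \<alpha> \<beta> p k \<ge> 0"
  unfolding step_prob_def Let_def
  by (auto intro!: divide_nonneg_nonneg add_nonneg_nonneg)

lemma pp_nonneg: "path_prob \<alpha> \<beta> p N \<ge> 0"
  unfolding path_prob_def using step_nonneg by (auto intro!: prod_nonneg)

lemma ZZ_le1_early: "N \<le> T \<Longrightarrow> ZZ T p N \<le> 1"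
proof (cases "N < T")
  case True then show ?thesis unfolding ZZ_def by simp
next
  case False
  assume "N \<le> T"
  then have "N = T" using False by simp
  then show ?thesis unfolding ZZ_def using kc_le[of N T p] VV_le1[of p N] bad_def by auto
qed

lemma EZ: "(\<Sum>p\<in>NN N. path_prob \<alpha> \<beta> p N * ZZ T p N) \<le> 1"
proof (induction N)
  case 0
  have "ZZ T (\<lambda>_. 0) 0 \<le> 1" by (rule ZZ_le1_early) simp
  then show ?case by (simp add: NN_0 path_prob_def)
next
  case (Suc N)
  have "(\<Sum>q\<in>NN (Suc N). path_prob \<alpha> \<beta> q (Suc N) * ZZ T q (Suc N))
      = (\<Sum>p\<in>NN N. path_prob \<alpha> \<beta> p N * (up (Delta \<alpha> p N (p N)) * ZZ T (p(Suc N := p N + 1)) (Suc N)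
          + up (- Delta \<alpha> p N (p N)) * ZZ T (p(Suc N := p N - 1)) (Suc N)))"
    unfolding sum_NN_Suc path_prob_ext step_up step_dn by (simp add: algebra_simps)
  also have "\<dots> \<le> (\<Sum>p\<in>NN N. path_prob \<alpha> \<beta> p N * ZZ T p N)"
    using super pp_nonneg by (intro sum_mono mult_left_mono) auto
  also have "\<dots> \<le> 1" by (rule Suc)
  finally show ?case .
qed


lemma count_bound:
  "(\<Sum>p\<in>NN N \<inter> {p. bad T p N \<and> m \<le> kc T p N \<and> T \<le> N}. path_prob \<alpha> \<beta> p N) \<le> 2 / th ^ m"
proof -
  let ?B = "{p. bad T p N \<and> m \<le> kc T p N \<and> T \<le> N}"
  have thmpos: "th ^ m > 0" using th_pos by simp
  have pt: "path_prob \<alpha> \<beta> p N \<le> 2 / th ^ m * (path_prob \<alpha> \<beta> p N * ZZ T p N)" if "p \<in> ?B" for p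
  proof -
    have b: "bad T p N" "m \<le> kc T p N" "T \<le> N" using that by auto
    have g: "good p N" using b unfolding bad_def by auto
    have Z: "ZZ T p N = th ^ kc T p N * VV p N" unfolding ZZ_def using b by simp
    have "th ^ m \<le> th ^ kc T p N" using b th_ge1 by (intro power_increasing) auto
    then have "th ^ m * (1/2) \<le> th ^ kc T p N * VV p N"
      using VV_ge[OF g] thmpos by (intro mult_mono) auto
    then have "1 \<le> 2 / th ^ m * ZZ T p N" unfolding Z using thmpos by (simp add: field_simps)
    then show ?thesis using pp_nonneg[of p N] mult_left_mono[of 1 "2 / th ^ m * ZZ T p N" "path_prob \<alpha> \<beta> p N"]
      by (simp add: algebra_simps)
  qed
  have "(\<Sum>p\<in>NN N \<inter> ?B. path_prob \<alpha> \<beta> p N) \<le> (\<Sum>p\<in>NN N \<inter> ?B. 2 / th ^ m * (path_prob \<alpha> \<beta> p N * ZZ T p N))"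
    using pt by (intro sum_mono) auto
  also have "\<dots> \<le> (\<Sum>p\<in>NN N. 2 / th ^ m * (path_prob \<alpha> \<beta> p N * ZZ T p N))"
    using finite_NN pp_nonneg ZZ_ge0 thmpos
    by (intro sum_mono2) (auto intro!: mult_nonneg_nonneg)
  also have "\<dots> = 2 / th ^ m * (\<Sum>p\<in>NN N. path_prob \<alpha> \<beta> p N * ZZ T p N)"
    by (simp add: sum_distrib_left)
  also have "\<dots> \<le> 2 / th ^ m * 1" using EZ thmpos by (intro mult_left_mono) auto
  finally show ?thesis by simp
qed

end

locale wwalk = wsetup \<alpha> \<beta> C x + prob_space M
  for \<alpha> \<beta> C :: real and x :: int and M :: "'a measure" +
  fixes X :: "nat \<Rightarrow> 'a \<Rightarrow> int"
  assumes Xmeas: "\<And>i. X i \<in> measurable M (count_space UNIV)"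
  and Xcyl: "\<And>n p. measure M {\<omega> \<in> space M. \<forall>i\<le>n. X i \<omega> = p i} = path_prob \<alpha> \<beta> p n"
begin

definition path :: "'a \<Rightarrow> nat \<Rightarrow> int" where "path \<omega> = (\<lambda>i. X i \<omega>)"
definition cyl :: "(nat \<Rightarrow> int) \<Rightarrow> nat \<Rightarrow> 'a set" where
  "cyl p N = {\<omega> \<in> space M. \<forall>i\<in>{..N}. X i \<omega> = p i}"
definition pdet :: "nat \<Rightarrow> (nat \<Rightarrow> int) set \<Rightarrow> bool" where
  "pdet N A \<longleftrightarrow> (\<forall>p q. (\<forall>i\<le>N. p i = q i) \<longrightarrow> (p \<in> A \<longleftrightarrow> q \<in> A))"

lemma cyl_sets: "cyl p N \<in> sets M"
  unfolding cyl_def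
proof (rule sets.sets_Collect_finite_All')
  fix i
  have "X i -` {p i} \<inter> space M \<in> sets M" by (rule measurable_sets[OF Xmeas]) simp
  moreover have "{\<omega> \<in> space M. X i \<omega> = p i} = X i -` {p i} \<inter> space M" by auto
  ultimately show "{\<omega> \<in> space M. X i \<omega> = p i} \<in> sets M" by simp
qed auto

lemma cyl_meas: "measure M (cyl p N) = path_prob \<alpha> \<beta> p N"
proof -
  have "cyl p N = {\<omega> \<in> space M. \<forall>i\<le>N. X i \<omega> = p i}" unfolding cyl_def by auto
  then show ?thesis using Xcyl[of N p] by simp
qed

definition LL :: "int list \<Rightarrow> nat \<Rightarrow> int" where "LL l = (\<lambda>i. if i < length l then l ! i else 0)"

lemma pdet_sets: assumes "pdet N A" shows "{\<omega> \<in> space M. path \<omega> \<in> A} \<in> sets M"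
proof -
  have "{\<omega> \<in> space M. path \<omega> \<in> A} = (\<Union>l\<in>{l. LL l \<in> A}. cyl (LL l) N)"
  proof
    show "{\<omega> \<in> space M. path \<omega> \<in> A} \<subseteq> (\<Union>l\<in>{l. LL l \<in> A}. cyl (LL l) N)"
    proof
      fix \<omega> assume w: "\<omega> \<in> {\<omega> \<in> space M. path \<omega> \<in> A}"
      define l where "l = map (\<lambda>i. X i \<omega>) [0..<Suc N]"
      have ag: "\<forall>i\<le>N. LL l i = path \<omega> i" unfolding l_def LL_def path_def by (auto simp del: upt_Suc)
      then have "LL l \<in> A" using w assms unfolding pdet_def by blast
      moreover have "\<omega> \<in> cyl (LL l) N" using w ag unfolding cyl_def path_def by auto
      ultimately show "\<omega> \<in> (\<Union>l\<in>{l. LL l \<in> A}. cyl (LL l) N)" by blast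
    qed
  next
    show "(\<Union>l\<in>{l. LL l \<in> A}. cyl (LL l) N) \<subseteq> {\<omega> \<in> space M. path \<omega> \<in> A}"
    proof
      fix \<omega> assume "\<omega> \<in> (\<Union>l\<in>{l. LL l \<in> A}. cyl (LL l) N)"
      then obtain l where l: "LL l \<in> A" "\<omega> \<in> cyl (LL l) N" by blast
      then have "\<forall>i\<le>N. LL l i = path \<omega> i" unfolding cyl_def path_def by auto
      then have "path \<omega> \<in> A" using l assms unfolding pdet_def by blast
      then show "\<omega> \<in> {\<omega> \<in> space M. path \<omega> \<in> A}" using l unfolding cyl_def by auto
    qed
  qed
  also have "\<dots> \<in> sets M" by (intro sets.countable_UN') (auto intro: cyl_sets)
  finally show ?thesis .
qed

lemma cyl_disj: "disjoint_family_on (\<lambda>p. cyl p N) (NN N)"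
  unfolding disjoint_family_on_def
proof (intro ballI impI)
  fix p q assume p: "p \<in> NN N" and q: "q \<in> NN N" and ne: "p \<noteq> q"
  have "\<exists>i\<le>N. p i \<noteq> q i"
  proof (rule ccontr)
    assume "\<not> (\<exists>i\<le>N. p i \<noteq> q i)"
    moreover have "\<forall>i>N. p i = q i" using p q unfolding NN_def by auto
    ultimately have "p = q" by (metis ext not_le)
    then show False using ne by simp
  qed
  then show "cyl p N \<inter> cyl q N = {}" unfolding cyl_def by auto
qed

lemma prob_bound:
  assumes "pdet N A"
  shows "measure M {\<omega> \<in> space M. path \<omega> \<in> A} \<le> (\<Sum>p\<in>NN N \<inter> A. path_prob \<alpha> \<beta> p N)"
proof -
  define U where "U = (\<Union>p\<in>NN N \<inter> A. cyl p N)"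
  define W where "W = space M - (\<Union>p\<in>NN N. cyl p N)"
  have Us: "U \<in> sets M" unfolding U_def using finite_NN cyl_sets by (intro sets.finite_UN) auto
  have Ws0: "(\<Union>p\<in>NN N. cyl p N) \<in> sets M" using finite_NN cyl_sets by (intro sets.finite_UN) auto
  have m1: "measure M (\<Union>p\<in>NN N. cyl p N) = 1"
    using finite_measure_finite_Union[OF finite_NN _ cyl_disj] cyl_sets cyl_meas sum_NN_prob by auto
  have "measure M W = 0" unfolding W_def using finite_measure_compl[OF Ws0] m1 prob_space by simp
  moreover have Ws: "W \<in> sets M" unfolding W_def using Ws0 by auto
  ultimately have Wn: "W \<in> null_sets M" by (simp add: null_setsI emeasure_eq_measure)
  have sub: "{\<omega> \<in> space M. path \<omega> \<in> A} \<subseteq> U \<union> W"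
  proof
    fix \<omega> assume w: "\<omega> \<in> {\<omega> \<in> space M. path \<omega> \<in> A}"
    show "\<omega> \<in> U \<union> W"
    proof (cases "\<omega> \<in> (\<Union>p\<in>NN N. cyl p N)")
      case True
      then obtain p where p: "p \<in> NN N" "\<omega> \<in> cyl p N" by blast
      then have "\<forall>i\<le>N. p i = path \<omega> i" unfolding cyl_def path_def by auto
      then have "p \<in> A" using w assms unfolding pdet_def by blast
      then show ?thesis using p unfolding U_def by blast
    next
      case False then show ?thesis using w unfolding W_def by auto
    qed
  qed
  have "measure M {\<omega> \<in> space M. path \<omega> \<in> A} \<le> measure M (U \<union> W)"
    using sub Us Ws by (intro finite_measure_mono) auto
  also have "\<dots> = measure M U" by (rule measure_Un_null_set[OF Us Wn])
  also have "\<dots> \<le> (\<Sum>p\<in>NN N \<inter> A. measure M (cyl p N))"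
    unfolding U_def using finite_NN cyl_sets by (intro finite_measure_subadditive_finite) auto
  also have "\<dots> = (\<Sum>p\<in>NN N \<inter> A. path_prob \<alpha> \<beta> p N)" using cyl_meas by simp
  finally show ?thesis .
qed

lemma bad_cong: "(\<And>i. i \<le> N \<Longrightarrow> p i = q i) \<Longrightarrow> bad T p N = bad T q N"
proof -
  assume a: "\<And>i. i \<le> N \<Longrightarrow> p i = q i"
  have "k \<le> N \<Longrightarrow> good p k = good q k" for k
    by (rule good_cong) (use a in auto)
  then show ?thesis unfolding bad_def by auto
qed

lemma kc_cong: "(\<And>i. i \<le> N \<Longrightarrow> p i = q i) \<Longrightarrow> kc T p N = kc T q N"
proof -
  assume a: "\<And>i. i \<le> N \<Longrightarrow> p i = q i"
  have "{j. T \<le> j \<and> j < N \<and> arr p j} = {j. T \<le> j \<and> j < N \<and> arr q j}"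
    unfolding arr_def using a by (auto simp: Suc_le_eq)
  then show ?thesis unfolding kc_def by simp
qed

definition EB :: "nat \<Rightarrow> nat \<Rightarrow> nat \<Rightarrow> (nat \<Rightarrow> int) set" where
  "EB T m N = {p. bad T p N \<and> m \<le> kc T p N \<and> T \<le> N}"

lemma pdet_EB: "pdet N (EB T m N)"
  unfolding pdet_def
proof (intro allI impI)
  fix p q :: "nat \<Rightarrow> int" assume a: "\<forall>i\<le>N. p i = q i"
  have "bad T p N = bad T q N" "kc T p N = kc T q N" using a by (intro bad_cong kc_cong; simp)+
  then show "p \<in> EB T m N \<longleftrightarrow> q \<in> EB T m N" unfolding EB_def by simp
qed

lemma prob_EB: "measure M {\<omega> \<in> space M. path \<omega> \<in> EB T m N} \<le> 2 / th ^ m"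
proof -
  have "(\<Sum>p\<in>NN N \<inter> EB T m N. path_prob \<alpha> \<beta> p N) \<le> 2 / th ^ m" unfolding EB_def by (rule count_bound)
  then show ?thesis using prob_bound[OF pdet_EB[of N T m]] by linarith
qed

end

definition nnp :: "(nat \<Rightarrow> int) \<Rightarrow> bool" where
  "nnp p \<longleftrightarrow> p 0 = 0 \<and> (\<forall>k. p (Suc k) = p k + 1 \<or> p (Suc k) = p k - 1)"

lemma ivt_up:
  assumes nn: "nnp p" and "p a \<le> v" "v \<le> p (a + d)"
  shows "\<exists>j. a \<le> j \<and> j \<le> a + d \<and> p j = v"
  using assms(2,3)
proof (induction d arbitrary: v)
  case 0 then show ?case by auto
next
  case (Suc d)
  show ?case
  proof (cases "v \<le> p (a + d)")
    case True
    then obtain j where "a \<le> j" "j \<le> a + d" "p j = v" using Suc.IH[OF Suc.prems(1)] by blast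
    then show ?thesis by (intro exI[of _ j]) auto
  next
    case False
    have "p (Suc (a + d)) = p (a + d) + 1 \<or> p (Suc (a + d)) = p (a + d) - 1" using nn unfolding nnp_def by blast
    then have "p (a + Suc d) = v" using False Suc.prems by auto
    then show ?thesis by (intro exI[of _ "a + Suc d"]) auto
  qed
qed

lemma ivt_dn:
  assumes nn: "nnp p" and "v \<le> p a" "p (a + d) \<le> v"
  shows "\<exists>j. a \<le> j \<and> j \<le> a + d \<and> p j = v"
  using assms(2,3)
proof (induction d arbitrary: v)
  case 0 then show ?case by auto
next
  case (Suc d)
  show ?case
  proof (cases "p (a + d) \<le> v")
    case True
    then obtain j where "a \<le> j" "j \<le> a + d" "p j = v" using Suc.IH[OF Suc.prems(1)] by blast
    then show ?thesis by (intro exI[of _ j]) auto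
  next
    case False
    have "p (Suc (a + d)) = p (a + d) + 1 \<or> p (Suc (a + d)) = p (a + d) - 1" using nn unfolding nnp_def by blast
    then have "p (a + Suc d) = v" using False Suc.prems by auto
    then show ?thesis by (intro exI[of _ "a + Suc d"]) auto
  qed
qed

lemma inf_card_ge:
  assumes "infinite (I :: nat set)"
  shows "\<exists>n. m \<le> card {k \<in> I. k < n}"
proof -
  obtain F where F: "F \<subseteq> I" "finite F" "card F = m" using infinite_arbitrarily_large[OF assms] by blast
  obtain n where n: "F \<subseteq> {..<n}" using finite_nat_bounded[OF F(2)] by blast
  have "F \<subseteq> {k \<in> I. k < n}" using F n by auto
  then have "card F \<le> card {k \<in> I. k < n}" by (intro card_mono) auto
  then show ?thesis using F by auto
qed

lemma inf_shift: "infinite {m::nat. m \<ge> 1 \<and> p m = j} \<longleftrightarrow> infinite {m. p m = j}"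
proof -
  have "{m. p m = j} \<subseteq> insert 0 {m. m \<ge> 1 \<and> p m = j}" by auto
  moreover have "{m. m \<ge> 1 \<and> p m = j} \<subseteq> {m. p m = j}" by auto
  ultimately show ?thesis by (meson finite_insert finite_subset)
qed

context wsetup begin

lemma D1_step:
  assumes "nnp p"
  shows "D1 p (Suc N) = D1 p N
     - \<alpha> * (if x = (if p (Suc N) = p N + 1 then p N + 1 else p N) then 1 else 0)
     + (if x + 1 = (if p (Suc N) = p N + 1 then p N + 1 else p N) then 1 else 0)
     - (if x + 2 = (if p (Suc N) = p N + 1 then p N + 1 else p N) then 1 else 0)
     + \<alpha> * (if x + 3 = (if p (Suc N) = p N + 1 then p N + 1 else p N) then 1 else 0)"
proof -
  let ?e = "(if p (Suc N) = p N + 1 then p N + 1 else p N)"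
  have h: "p (Suc N) = p N + 1 \<and> ?e = p N + 1 \<or> p (Suc N) = p N - 1 \<and> ?e = p N"
    using assms unfolding nnp_def by auto
  show ?thesis using D1_ext[where v="p (Suc N)" and p=p and N=N and e="?e", OF h] by simp
qed

lemma D2_step:
  assumes "nnp p"
  shows "D2 p (Suc N) = D2 p N
     - \<alpha> * (if x + 1 = (if p (Suc N) = p N + 1 then p N + 1 else p N) then 1 else 0)
     + (if x + 2 = (if p (Suc N) = p N + 1 then p N + 1 else p N) then 1 else 0)
     - (if x + 3 = (if p (Suc N) = p N + 1 then p N + 1 else p N) then 1 else 0)
     + \<alpha> * (if x + 4 = (if p (Suc N) = p N + 1 then p N + 1 else p N) then 1 else 0)"
proof -
  let ?e = "(if p (Suc N) = p N + 1 then p N + 1 else p N)"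
  have h: "p (Suc N) = p N + 1 \<and> ?e = p N + 1 \<or> p (Suc N) = p N - 1 \<and> ?e = p N"
    using assms unfolding nnp_def by auto
  show ?thesis using D2_ext[where v="p (Suc N)" and p=p and N=N and e="?e", OF h] by simp
qed

lemma det:
  assumes nn: "nnp p"
    and R: "{j. infinite {m. m \<ge> 1 \<and> p m = j}} = {x, x + 1, x + 2, x + 3}"
    and fin: "finite {k. condA p k \<or> condB p k}"
  shows "\<exists>T. (\<forall>N. bad T p N) \<and> (\<forall>m. \<exists>N. T \<le> N \<and> m \<le> kc T p N)"
proof -
  have vis: "infinite {m. p m = j} \<longleftrightarrow> j \<in> {x, x + 1, x + 2, x + 3}" for j
    using R inf_shift[of p j] by blast
  have stp: "p (Suc k) = p k + 1 \<or> p (Suc k) = p k - 1" for k using nn unfolding nnp_def by blast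
  have unb: "\<exists>n>m. p n = j" if "j \<in> {x, x + 1, x + 2, x + 3}" for m j
    using vis[of j] that unfolding infinite_nat_iff_unbounded by auto
  have finF: "finite ({m. p m = x - 1} \<union> {m. p m = x + 4})" using vis[of "x - 1"] vis[of "x + 4"] by auto
  obtain T0 where T0: "{m. p m = x - 1} \<union> {m. p m = x + 4} \<subseteq> {..<T0}" using finite_nat_bounded[OF finF] by blast
  have conf: "x \<le> p k \<and> p k \<le> x + 3" if "T0 \<le> k" for k
  proof
    show "x \<le> p k"
    proof (rule ccontr)
      assume "\<not> x \<le> p k"
      obtain k' where k': "k' > k" "p k' = x" using unb[of x k] by auto
      obtain j where j: "k \<le> j" "j \<le> k + (k' - k)" "p j = x - 1"
        using ivt_up[OF nn, of k "x - 1" "k' - k"] \<open>\<not> x \<le> p k\<close> k' by auto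
      then show False using T0 that by auto
    qed
    show "p k \<le> x + 3"
    proof (rule ccontr)
      assume "\<not> p k \<le> x + 3"
      obtain k' where k': "k' > k" "p k' = x + 3" using unb[of "x + 3" k] by auto
      obtain j where j: "k \<le> j" "j \<le> k + (k' - k)" "p j = x + 4"
        using ivt_dn[OF nn, of "x + 4" k "k' - k"] \<open>\<not> p k \<le> x + 3\<close> k' by auto
      then show False using T0 that by auto
    qed
  qed
  obtain T1 where T1: "{k. condA p k \<or> condB p k} \<subseteq> {..<T1}" using finite_nat_bounded[OF fin] by blast
  have nAB: "\<not> condA p k \<and> \<not> condB p k" if "T1 \<le> k" for k using T1 that by auto
  define T01 where "T01 = max T0 T1"
  obtain TA where TA: "TA > T01" "p TA = x" using unb[of x T01] by auto
  obtain TB where TB: "TB > T01" "p TB = x + 3" using unb[of "x + 3" T01] by auto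
  have TAge: "T0 \<le> TA" "T1 \<le> TA" using TA unfolding T01_def by auto
  have TBge: "T0 \<le> TB" "T1 \<le> TB" using TB unfolding T01_def by auto
  have invA: "TA \<le> k \<Longrightarrow> p k = x + 2 \<Longrightarrow> SS p k \<le> - C - 1 \<Longrightarrow> D1 p k > - C - 1" for k
  proof (induction k rule: less_induct)
    case (less k)
    have "k \<noteq> TA" using less TA by auto
    then obtain k1 where k1: "k = Suc k1" "TA \<le> k1" using less.prems(1) by (cases k) auto
    have "p k1 = x + 1 \<or> p k1 = x + 3" using stp[of k1] k1 less.prems(2) by auto
    then show ?case
    proof
      assume a: "p k1 = x + 1"
      have d1: "D1 p k = D1 p k1 - 1" using D1_step[OF nn, of k1] k1 a less.prems(2) by simp
      have d2: "D2 p k = D2 p k1 + 1" using D2_step[OF nn, of k1] k1 a less.prems(2) by simp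
      have "SS p k1 \<le> - C - 1" using less.prems(3) d1 d2 unfolding SS_def by simp
      moreover have "\<not> condA p k1" using nAB[of k1] k1 TAge by simp
      ultimately have "D1 p k1 > - C" using a C_pos unfolding condA_def by auto
      then show ?thesis using d1 by simp
    next
      assume a: "p k1 = x + 3"
      have "k1 \<noteq> TA" using a TA by auto
      then obtain k2 where k2: "k1 = Suc k2" "TA \<le> k2" using k1 by (cases k1) auto
      have "x \<le> p k2 \<and> p k2 \<le> x + 3" using conf[of k2] k2 TAge by simp
      then have p2: "p k2 = x + 2" using stp[of k2] k2 a by auto
      have d1: "D1 p k = D1 p k1 + \<alpha>" using D1_step[OF nn, of k1] k1 a less.prems(2) by simp
      have d2: "D2 p k = D2 p k1 - 1" using D2_step[OF nn, of k1] k1 a less.prems(2) by simp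
      have d1': "D1 p k1 = D1 p k2 + \<alpha>" using D1_step[OF nn, of k2] k2 a p2 by simp
      have d2': "D2 p k1 = D2 p k2 - 1" using D2_step[OF nn, of k2] k2 a p2 by simp
      have "SS p k2 \<le> - C - 1" using less.prems(3) d1 d2 d1' d2' alpha_gt unfolding SS_def by simp
      then have "D1 p k2 > - C - 1" using less.IH[of k2] k1 k2 p2 by simp
      then show ?thesis using d1 d1' alpha_gt by simp
    qed
  qed
  have invB: "TB \<le> k \<Longrightarrow> p k = x + 1 \<Longrightarrow> SS p k \<ge> C + 1 \<Longrightarrow> D2 p k < C + 1" for k
  proof (induction k rule: less_induct)
    case (less k)
    have "k \<noteq> TB" using less TB by auto
    then obtain k1 where k1: "k = Suc k1" "TB \<le> k1" using less.prems(1) by (cases k) auto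
    have "p k1 = x \<or> p k1 = x + 2" using stp[of k1] k1 less.prems(2) by auto
    then show ?case
    proof
      assume a: "p k1 = x + 2"
      have d1: "D1 p k = D1 p k1 - 1" using D1_step[OF nn, of k1] k1 a less.prems(2) by simp
      have d2: "D2 p k = D2 p k1 + 1" using D2_step[OF nn, of k1] k1 a less.prems(2) by simp
      have "SS p k1 \<ge> C + 1" using less.prems(3) d1 d2 unfolding SS_def by simp
      moreover have "\<not> condB p k1" using nAB[of k1] k1 TBge by simp
      ultimately have "D2 p k1 < C" using a C_pos unfolding condB_def by auto
      then show ?thesis using d2 by simp
    next
      assume a: "p k1 = x"
      have "k1 \<noteq> TB" using a TB by auto
      then obtain k2 where k2: "k1 = Suc k2" "TB \<le> k2" using k1 by (cases k1) auto
      have "x \<le> p k2 \<and> p k2 \<le> x + 3" using conf[of k2] k2 TBge by simp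
      then have p2: "p k2 = x + 1" using stp[of k2] k2 a by auto
      have d1: "D1 p k = D1 p k1 + 1" using D1_step[OF nn, of k1] k1 a less.prems(2) by simp
      have d2: "D2 p k = D2 p k1 - \<alpha>" using D2_step[OF nn, of k1] k1 a less.prems(2) by simp
      have d1': "D1 p k1 = D1 p k2 + 1" using D1_step[OF nn, of k2] k2 a p2 by simp
      have d2': "D2 p k1 = D2 p k2 - \<alpha>" using D2_step[OF nn, of k2] k2 a p2 by simp
      have "SS p k2 \<ge> C + 1" using less.prems(3) d1 d2 d1' d2' alpha_gt unfolding SS_def by simp
      then have "D2 p k2 < C + 1" using less.IH[of k2] k1 k2 p2 by simp
      then show ?thesis using d2 d2' alpha_gt by simp
    qed
  qed
  define T2 where "T2 = max TA TB"
  have allbad: "bad T2 p N" for N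
    unfolding bad_def good_alt
  proof (intro allI impI)
    fix k assume k: "T2 \<le> k \<and> k \<le> N"
    have "TA \<le> k" "TB \<le> k" using k unfolding T2_def by auto
    then show "x \<le> p k \<and> p k \<le> x + 3 \<and> \<not> condA p k \<and> \<not> condB p k
       \<and> (p k = x + 2 \<and> SS p k \<le> - C - 1 \<longrightarrow> D1 p k > - C - 1)
       \<and> (p k = x + 1 \<and> SS p k \<ge> C + 1 \<longrightarrow> D2 p k < C + 1)"
      using conf[of k] nAB[of k] invA[of k] invB[of k] TAge by auto
  qed
  have T2ge: "T0 \<le> T2" unfolding T2_def using TAge by auto
  define I2 where "I2 = {j. T2 \<le> j \<and> arr p j}"
  have infI2: "infinite I2"
    unfolding infinite_nat_iff_unbounded I2_def
  proof
    fix m0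
    obtain n where n: "n > m0 + T2" "p n = x" using unb[of x "m0 + T2"] by auto
    have "x \<le> p (Suc n)" using conf[of "Suc n"] n T2ge by simp
    then have "p (Suc n) = x + 1" using stp[of n] n by auto
    then show "\<exists>k>m0. k \<in> {j. T2 \<le> j \<and> arr p j}" using n unfolding arr_def
      by (intro exI[of _ n]) auto
  qed
  have kcu: "\<exists>N. T2 \<le> N \<and> m \<le> kc T2 p N" for m
  proof -
    obtain n where n: "m \<le> card {k \<in> I2. k < n}" using inf_card_ge[OF infI2] by blast
    have "card {k \<in> I2. k < n} \<le> kc T2 p (max n T2)" unfolding kc_def I2_def
      by (intro card_mono) auto
    then show ?thesis using n by (intro exI[of _ "max n T2"]) auto
  qed
  show ?thesis using allbad kcu by blast
qed

end

context wwalk begin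

lemma AE_nn: "AE \<omega> in M. nnp (path \<omega>)"
proof -
  define A where "A N = {p :: nat \<Rightarrow> int. \<not> (p 0 = 0 \<and> (\<forall>k<N. p (Suc k) = p k + 1 \<or> p (Suc k) = p k - 1))}" for N
  have pd: "pdet N (A N)" for N
    unfolding pdet_def
  proof (intro allI impI)
    fix p q :: "nat \<Rightarrow> int" assume a: "\<forall>i\<le>N. p i = q i"
    have "p 0 = q 0" using a by simp
    moreover have "\<forall>k<N. p (Suc k) = q (Suc k) \<and> p k = q k" using a by (auto simp: Suc_le_eq)
    ultimately show "p \<in> A N \<longleftrightarrow> q \<in> A N" unfolding A_def by auto
  qed
  have ae: "AE \<omega> in M. path \<omega> \<notin> A N" for N
  proof -
    have "NN N \<inter> A N = {}" unfolding NN_def A_def by auto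
    then have "measure M {\<omega> \<in> space M. path \<omega> \<in> A N} \<le> 0" using prob_bound[OF pd[of N]] by simp
    then have m0: "measure M {\<omega> \<in> space M. path \<omega> \<in> A N} = 0" using measure_nonneg[of M] by (meson antisym)
    have s: "{\<omega> \<in> space M. path \<omega> \<in> A N} \<in> sets M" by (rule pdet_sets[OF pd])
    have "{\<omega> \<in> space M. path \<omega> \<in> A N} \<in> null_sets M"
      using s m0 by (simp add: null_setsI emeasure_eq_measure)
    then show ?thesis by (rule AE_I') auto
  qed
  then have "AE \<omega> in M. \<forall>N. path \<omega> \<notin> A N" by (simp add: AE_all_countable)
  then show ?thesis
  proof (rule AE_mp[OF _ AE_I2], intro impI)
    fix \<omega> assume h: "\<forall>N. path \<omega> \<notin> A N"
    have "path \<omega> 0 = 0" using h[rule_format, of 0] unfolding A_def by simp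
    moreover have "path \<omega> (Suc k) = path \<omega> k + 1 \<or> path \<omega> (Suc k) = path \<omega> k - 1" for k
      using h[rule_format, of "Suc k"] unfolding A_def by simp
    ultimately show "nnp (path \<omega>)" unfolding nnp_def by blast
  qed
qed

lemma pdet_bad: "pdet N {p. bad T p N}"
  unfolding pdet_def
proof (intro allI impI)
  fix p q :: "nat \<Rightarrow> int" assume a: "\<forall>i\<le>N. p i = q i"
  have "bad T p N = bad T q N" by (rule bad_cong) (use a in auto)
  then show "p \<in> {p. bad T p N} \<longleftrightarrow> q \<in> {p. bad T p N}" by simp
qed

lemma pdet_kc: "pdet N {p. T \<le> N \<and> m \<le> kc T p N}"
  unfolding pdet_def
proof (intro allI impI)
  fix p q :: "nat \<Rightarrow> int" assume a: "\<forall>i\<le>N. p i = q i"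
  have "kc T p N = kc T q N" by (rule kc_cong) (use a in auto)
  then show "p \<in> {p. T \<le> N \<and> m \<le> kc T p N} \<longleftrightarrow> q \<in> {p. T \<le> N \<and> m \<le> kc T p N}" by simp
qed

lemma kc_mono: "N \<le> N' \<Longrightarrow> kc T p N \<le> kc T p N'"
  unfolding kc_def by (intro card_mono) auto

definition GS :: "nat \<Rightarrow> nat \<Rightarrow> nat \<Rightarrow> 'a set" where
  "GS T m N = {\<omega> \<in> space M. (\<forall>N'. bad T (path \<omega>) N') \<and> T \<le> N \<and> m \<le> kc T (path \<omega>) N}"

lemma GS_sets: "GS T m N \<in> sets M"
proof -
  have s1: "range (\<lambda>N'. {\<omega> \<in> space M. path \<omega> \<in> {p. bad T p N'}}) \<subseteq> sets M"
    using pdet_sets[OF pdet_bad] by blast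
  have s2: "(\<Inter>N'. {\<omega> \<in> space M. path \<omega> \<in> {p. bad T p N'}}) \<in> sets M"
    using sets.countable_INT[OF s1 UNIV_not_empty] by simp
  have s3: "{\<omega> \<in> space M. path \<omega> \<in> {p. T \<le> N \<and> m \<le> kc T p N}} \<in> sets M"
    by (rule pdet_sets[OF pdet_kc])
  have "GS T m N = (\<Inter>N'. {\<omega> \<in> space M. path \<omega> \<in> {p. bad T p N'}}) \<inter> {\<omega> \<in> space M. path \<omega> \<in> {p. T \<le> N \<and> m \<le> kc T p N}}"
    unfolding GS_def by blast
  then show ?thesis using sets.Int[OF s2 s3] by simp
qed

lemma GS_bound: "measure M (GS T m N) \<le> 2 / th ^ m"
proof -
  have "GS T m N \<subseteq> {\<omega> \<in> space M. path \<omega> \<in> EB T m N}" unfolding GS_def EB_def by auto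
  then have "measure M (GS T m N) \<le> measure M {\<omega> \<in> space M. path \<omega> \<in> EB T m N}"
    using pdet_sets[OF pdet_EB] by (intro finite_measure_mono) auto
  then show ?thesis using prob_EB[of T m N] by linarith
qed

lemma H_bound: "measure M (\<Union>N. GS T m N) \<le> 2 / th ^ m"
proof -
  have inc: "incseq (GS T m)"
    unfolding incseq_def
  proof (intro allI impI subsetI)
    fix N N' \<omega> assume le: "N \<le> N'" and w: "\<omega> \<in> GS T m N"
    have "kc T (path \<omega>) N \<le> kc T (path \<omega>) N'" using le by (rule kc_mono)
    then show "\<omega> \<in> GS T m N'" using w le unfolding GS_def by auto
  qed
  have "(\<lambda>N. measure M (GS T m N)) \<longlonglongrightarrow> measure M (\<Union>N. GS T m N)"
    using GS_sets inc by (intro finite_Lim_measure_incseq) auto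
  then show ?thesis using GS_bound by (intro LIMSEQ_le_const2) auto
qed

definition HI :: "nat \<Rightarrow> 'a set" where "HI T = (\<Inter>m. \<Union>N. GS T m N)"

lemma HI_null: "HI T \<in> null_sets M"
proof -
  have u: "(\<Union>N. GS T m N) \<in> sets M" for m
    using sets.countable_UN[of "GS T m" UNIV] GS_sets by blast
  have r: "range (\<lambda>m. \<Union>N. GS T m N) \<subseteq> sets M" using u by blast
  have s: "HI T \<in> sets M" unfolding HI_def
    using sets.countable_INT[OF r UNIV_not_empty] by simp
  have b: "measure M (HI T) \<le> 2 / th ^ m" for m
  proof -
    have "HI T \<subseteq> (\<Union>N. GS T m N)" unfolding HI_def by auto
    then have "measure M (HI T) \<le> measure M (\<Union>N. GS T m N)"
      using GS_sets by (intro finite_measure_mono) auto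
    then show ?thesis using H_bound[of T m] by linarith
  qed
  have "measure M (HI T) = 0"
  proof (rule ccontr)
    assume "measure M (HI T) \<noteq> 0"
    then have mp: "measure M (HI T) > 0" using measure_nonneg[of M "HI T"] by linarith
    obtain m where m: "2 / measure M (HI T) < th ^ m" using real_arch_pow[OF th_gt1] by blast
    have "th ^ m > 0" using th_pos by simp
    then have "2 / th ^ m < measure M (HI T)" using m mp by (simp add: field_simps)
    then show False using b[of m] by linarith
  qed
  then show ?thesis using s by (simp add: null_setsI emeasure_eq_measure)
qed

definition Sset :: "'a \<Rightarrow> nat set" where
  "Sset \<omega> = {k. (X k \<omega> = x + 1 \<and> Delta \<alpha> (\<lambda>i. X i \<omega>) k (x + 1) \<le> - C
                          \<and> Delta \<alpha> (\<lambda>i. X i \<omega>) k (x + 1) + Delta \<alpha> (\<lambda>i. X i \<omega>) k (x + 2) \<le> - C)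
                      \<or> (X k \<omega> = x + 2 \<and> Delta \<alpha> (\<lambda>i. X i \<omega>) k (x + 2) \<ge> C
                          \<and> Delta \<alpha> (\<lambda>i. X i \<omega>) k (x + 1) + Delta \<alpha> (\<lambda>i. X i \<omega>) k (x + 2) \<ge> C)}"

lemma main_aux: "AE \<omega> in M. R' X \<omega> = {x, x+1, x+2, x+3} \<longrightarrow> infinite (Sset \<omega>)"
proof -
  have NS: "(\<Union>T. HI T) \<in> null_sets M" using HI_null by auto
  have "AE \<omega> in M. nnp (path \<omega>) \<longrightarrow> (R' X \<omega> = {x, x+1, x+2, x+3} \<longrightarrow> infinite (Sset \<omega>))"
  proof (rule AE_I'[OF NS], rule subsetI)
    fix \<omega> assume a: "\<omega> \<in> {\<omega> \<in> space M. \<not> (nnp (path \<omega>) \<longrightarrow> (R' X \<omega> = {x, x+1, x+2, x+3} \<longrightarrow> infinite (Sset \<omega>)))}"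
    then have w: "\<omega> \<in> space M" and nn: "nnp (path \<omega>)" and R: "R' X \<omega> = {x, x+1, x+2, x+3}"
      and fin: "finite (Sset \<omega>)" by auto
    have pw: "path \<omega> = (\<lambda>i. X i \<omega>)" unfolding path_def ..
    have R2: "{j. infinite {m. m \<ge> 1 \<and> path \<omega> m = j}} = {x, x + 1, x + 2, x + 3}"
      using R unfolding R'_def pw by simp
    have "{k. condA (path \<omega>) k \<or> condB (path \<omega>) k} = Sset \<omega>"
      unfolding Sset_def condA_def condB_def D1_def D2_def SS_def pw by simp
    then have fin2: "finite {k. condA (path \<omega>) k \<or> condB (path \<omega>) k}" using fin by simp
    obtain T where T: "\<forall>N. bad T (path \<omega>) N" "\<forall>m. \<exists>N. T \<le> N \<and> m \<le> kc T (path \<omega>) N"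
      using det[OF nn R2 fin2] by blast
    have "\<omega> \<in> HI T" unfolding HI_def GS_def using T w by blast
    then show "\<omega> \<in> (\<Union>T. HI T)" by blast
  qed
  with AE_nn show ?thesis by (rule AE_mp)
qed

lemma main:
  "AE \<omega> in M. R' X \<omega> = {x, x+1, x+2, x+3} \<longrightarrow>
           infinite {k. (X k \<omega> = x + 1 \<and> Delta \<alpha> (\<lambda>i. X i \<omega>) k (x + 1) \<le> - C
                          \<and> Delta \<alpha> (\<lambda>i. X i \<omega>) k (x + 1) + Delta \<alpha> (\<lambda>i. X i \<omega>) k (x + 2) \<le> - C)
                      \<or> (X k \<omega> = x + 2 \<and> Delta \<alpha> (\<lambda>i. X i \<omega>) k (x + 2) \<ge> C
                          \<and> Delta \<alpha> (\<lambda>i. X i \<omega>) k (x + 1) + Delta \<alpha> (\<lambda>i. X i \<omega>) k (x + 2) \<ge> C)}"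
  using main_aux unfolding Sset_def .

end

theorem mainTheorem14:
  fixes M :: "'a measure" and X :: "nat \<Rightarrow> 'a \<Rightarrow> int"
    and \<alpha> \<beta> C :: real and x :: int
  assumes "\<alpha> > 1" and "\<beta> > 0" and "C > 0"
    and "is_walk M \<alpha> \<beta> X"
  shows "AE \<omega> in M. R' X \<omega> = {x, x+1, x+2, x+3} \<longrightarrow>
           infinite {k. (X k \<omega> = x + 1 \<and> Delta \<alpha> (\<lambda>i. X i \<omega>) k (x + 1) \<le> - C
                          \<and> Delta \<alpha> (\<lambda>i. X i \<omega>) k (x + 1) + Delta \<alpha> (\<lambda>i. X i \<omega>) k (x + 2) \<le> - C)
                      \<or> (X k \<omega> = x + 2 \<and> Delta \<alpha> (\<lambda>i. X i \<omega>) k (x + 2) \<ge> C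
                          \<and> Delta \<alpha> (\<lambda>i. X i \<omega>) k (x + 1) + Delta \<alpha> (\<lambda>i. X i \<omega>) k (x + 2) \<ge> C)}"
proof -
  have w: "wwalk \<alpha> \<beta> C M X"
    using assms unfolding wwalk_def wwalk_axioms_def wsetup_def is_walk_def by auto
  interpret W: wwalk \<alpha> \<beta> C x M X by (rule w)
  show ?thesis by (rule W.main)
qed


end
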